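(* Let $\mathbf A$ be an algebra with a Mal'cev term $q$. Then there exists a largest clone $\mathcal C$ on $A$ containing $q$ such that the algebra $(A,\mathcal C)$ has the same congruence lattice as $\mathbf A$ and, for every $n\ge1$ and all congruences $\alpha_0,\dots,\alpha_{n-1}$, the commutator $[\alpha_0,\dots,\alpha_{n-1}]$ computed in $(A,\mathcal C)$ equals the one computed in $\mathbf A$.
   Context: A Mal'cev term of $\mathbf A$ is a ternary term operation $q$ with $q(x,x,y)=y=q(y,x,x)$. For a clone $\mathcal C$ on $A$, $(A,\mathcal C)$ denotes the algebra whose operations are those of $\mathcal C$. Higher commutator (Bulatov): for congruences $\alpha_0,\dots,\alpha_{n-1},\gamma$ of an algebra, say $\alpha_0,\dots,\alpha_{n-2}$ centralize $\alpha_{n-1}$ modulo $\gamma$ if for all tuples $\mathbf a_i,\mathbf b_i$ ($i<n$, with $\mathbf a_i\neq\mathbf b_i$ congruent modulo $\alpha_i$ coordinatewise) and every term operation $t$ such that $t(\mathbf x_0,\dots,\mathbf x_{n-2},\mathbf a_{n-1})\equiv_\gamma t(\mathbf x_0,\dots,\mathbf x_{n-2},\mathbf b_{n-1})$ for all $(\mathbf x_0,\dots,\mathbf x_{n-2})\in(\{\mathbf a_0,\mathbf b_0\}\times\dots\times\{\mathbf a_{n-2},\mathbf b_{n-2}\})\setminus\{(\mathbf b_0,\dots,\mathbf b_{n-2})\}$, we have $t(\mathbf b_0,\dots,\mathbf b_{n-2},\mathbf a_{n-1})\equiv_\gamma t(\mathbf b_0,\dots,\mathbf b_{n-2},\mathbf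 b_{n-1})$. The commutator $[\alpha_0,\dots,\alpha_{n-1}]$ is the smallest congruence $\gamma$ such that $\alpha_0,\dots,\alpha_{n-2}$ centralize $\alpha_{n-1}$ modulo $\gamma$. *)

theory Defs
  imports Main
begin

text \<open>The universe of an algebra is the type 'a.  A finitary operation is a pair (n, f):
  its arity n and a function on lists, only the values on lists of length n being relevant.
  An algebra is given by its set F of fundamental operations.\<close>

type_synonym 'a operation = "nat \<times> ('a list \<Rightarrow> 'a)"

definition proj_op :: "nat \<Rightarrow> nat \<Rightarrow> 'a operation" where
  "proj_op m i = (m, \<lambda>xs. if length xs = m then xs ! i else undefined)"

definition comp_op :: "('a list \<Rightarrow> 'a) \<Rightarrow> nat \<Rightarrow> ('a list \<Rightarrow> 'a) list \<Rightarrow> 'a operation" where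
  "comp_op f m gs = (m, \<lambda>xs. if length xs = m then f (map (\<lambda>g. g xs) gs) else undefined)"

inductive_set Clo :: "'a operation set \<Rightarrow> 'a operation set" for F where
  proj: "i < m \<Longrightarrow> proj_op m i \<in> Clo F"
| comp: "(n, f) \<in> F \<Longrightarrow> length gs = n \<Longrightarrow> 0 < m \<Longrightarrow> (\<forall>g\<in>set gs. (m, g) \<in> Clo F)
          \<Longrightarrow> comp_op f m gs \<in> Clo F"

definition is_clone :: "'a operation set \<Rightarrow> bool" where
  "is_clone C \<longleftrightarrow>
     (\<forall>(n, f)\<in>C. 0 < n \<and> (\<forall>xs. length xs \<noteq> n \<longrightarrow> f xs = undefined)) \<and>
     (\<forall>m i. i < m \<longrightarrow> proj_op m i \<in> C) \<and>
     (\<forall>n f m gs. (n, f) \<in> C \<longrightarrow> length gs = n \<longrightarrow> (\<forall>g\<in>set gs. (m, g) \<in> C)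
        \<longrightarrow> comp_op f m gs \<in> C)"

definition malcev_term :: "'a operation set \<Rightarrow> 'a operation \<Rightarrow> bool" where
  "malcev_term F q \<longleftrightarrow> q \<in> Clo F \<and> fst q = 3 \<and>
     (\<forall>x y. snd q [x, x, y] = y \<and> snd q [y, x, x] = y)"

definition Con :: "'a operation set \<Rightarrow> 'a rel set" where
  "Con F = {\<theta>. equiv UNIV \<theta> \<and>
     (\<forall>(n, f)\<in>F. \<forall>xs ys. length xs = n \<longrightarrow> length ys = n \<longrightarrow>
        list_all2 (\<lambda>x y. (x, y) \<in> \<theta>) xs ys \<longrightarrow> (f xs, f ys) \<in> \<theta>)}"

text \<open>alphas = [alpha_0, ..., alpha_{n-1}]; the first n-1 centralize the last modulo gamma.
  Tuples a_i, b_i are lists as!i, bs!i; the term t = (m, f) takes the blocks concatenated.\<close>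
definition centralizes :: "'a operation set \<Rightarrow> 'a rel list \<Rightarrow> 'a rel \<Rightarrow> bool" where
  "centralizes F alphas \<gamma> \<longleftrightarrow>
     (let n = length alphas in
      \<forall>m f as bs. (m, f) \<in> Clo F \<longrightarrow> length as = n \<longrightarrow> length bs = n \<longrightarrow>
        (\<forall>i<n. length (as ! i) = length (bs ! i) \<and> as ! i \<noteq> bs ! i \<and>
               list_all2 (\<lambda>x y. (x, y) \<in> alphas ! i) (as ! i) (bs ! i)) \<longrightarrow>
        length (concat as) = m \<longrightarrow>
        (\<forall>s :: nat \<Rightarrow> bool. (\<exists>i<n - 1. \<not> s i) \<longrightarrow>
           (f (concat (map (\<lambda>i. if s i then bs ! i else as ! i) [0..<n - 1] @ [as ! (n - 1)])),
            f (concat (map (\<lambda>i. if s i then bs ! i else as ! i) [0..<n - 1] @ [bs ! (n - 1)])))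
           \<in> \<gamma>) \<longrightarrow>
        (f (concat (map (\<lambda>i. bs ! i) [0..<n - 1] @ [as ! (n - 1)])),
         f (concat (map (\<lambda>i. bs ! i) [0..<n - 1] @ [bs ! (n - 1)]))) \<in> \<gamma>)"

definition commutator :: "'a operation set \<Rightarrow> 'a rel list \<Rightarrow> 'a rel" where
  "commutator F alphas = \<Inter>{\<gamma> \<in> Con F. centralizes F alphas \<gamma>}"

definition same_con_comm :: "'a operation set \<Rightarrow> 'a operation set \<Rightarrow> bool" where
  "same_con_comm C F \<longleftrightarrow> Con C = Con F \<and>
     (\<forall>alphas. 1 \<le> length alphas \<longrightarrow> set alphas \<subseteq> Con F \<longrightarrow>
        commutator C alphas = commutator F alphas)"

end

theory Submission
  imports Defs
begin

lemma Clo_norm0: "x \<in> Clo F \<Longrightarrow> 0 < fst x \<and> (\<forall>xs. length xs \<noteq> fst x \<longrightarrow> snd x xs = undefined)"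
  by (induction rule: Clo.induct) (auto simp: proj_op_def comp_op_def)

lemma Clo_norm: "(n, f) \<in> Clo F \<Longrightarrow> 0 < n \<and> (\<forall>xs. length xs \<noteq> n \<longrightarrow> f xs = undefined)"
  using Clo_norm0[of "(n,f)"] by simp

lemma Clo_comp_closed0:
  assumes "x \<in> Clo F" "length gs = fst x" "\<forall>g\<in>set gs. (m, g) \<in> Clo F"
  shows "comp_op (snd x) m gs \<in> Clo F"
  using assms
proof (induction arbitrary: gs rule: Clo.induct)
  case (proj i k)
  have "gs ! i \<in> set gs" using proj by (simp add: proj_op_def)
  then have g: "(m, gs ! i) \<in> Clo F" using proj by auto
  have eq: "comp_op (snd (proj_op k i)) m gs = (m, gs ! i)"
    using Clo_norm[OF g] proj by (auto simp: comp_op_def proj_op_def fun_eq_iff)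
  show ?case unfolding eq by (rule g)
next
  case (comp k h hs k')
  have "length gs = k'" using comp(5) by (simp add: comp_op_def)
  then have "gs ! 0 \<in> set gs" using comp(3) by simp
  then have "(m, gs ! 0) \<in> Clo F" using comp(6) by blast
  then have mpos: "0 < m" using Clo_norm by blast
  let ?hs = "map (\<lambda>h'. snd (comp_op h' m gs)) hs"
  have "comp_op h m ?hs \<in> Clo F"
  proof (rule Clo.comp[OF comp(1)])
    show "length ?hs = k" using comp by simp
    show "0 < m" by fact
    show "\<forall>g\<in>set ?hs. (m, g) \<in> Clo F"
    proof
      fix g assume "g \<in> set ?hs"
      then obtain h' where h': "h' \<in> set hs" "g = snd (comp_op h' m gs)" by auto
      have "comp_op h' m gs \<in> Clo F" using comp h' by (auto simp: comp_op_def)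
      then show "(m, g) \<in> Clo F" using h' by (simp add: comp_op_def)
    qed
  qed
  moreover have "comp_op (snd (comp_op h k' hs)) m gs = comp_op h m ?hs"
    using comp by (auto simp: comp_op_def fun_eq_iff comp_def)
  ultimately show ?case by simp
qed

lemma Clo_comp_closed:
  "(n, f) \<in> Clo F \<Longrightarrow> length gs = n \<Longrightarrow> \<forall>g\<in>set gs. (m, g) \<in> Clo F \<Longrightarrow> comp_op f m gs \<in> Clo F"
  using Clo_comp_closed0[of "(n,f)"] by simp

lemma proj_in_Clo: "i < m \<Longrightarrow> proj_op m i \<in> Clo F" by (rule Clo.proj)

lemma is_clone_Clo: "is_clone (Clo F)"
  unfolding is_clone_def
proof (intro conjI)
  show "\<forall>(n, f)\<in>Clo F. 0 < n \<and> (\<forall>xs. length xs \<noteq> n \<longrightarrow> f xs = undefined)"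
    using Clo_norm by blast
  show "\<forall>m i. i < m \<longrightarrow> proj_op m i \<in> Clo F" using Clo.proj by blast
  show "\<forall>n f m gs. (n, f) \<in> Clo F \<longrightarrow> length gs = n \<longrightarrow> (\<forall>g\<in>set gs. (m, g) \<in> Clo F)
        \<longrightarrow> comp_op f m gs \<in> Clo F" using Clo_comp_closed by blast
qed

lemma clone_Clo_sub0: "is_clone E \<Longrightarrow> x \<in> Clo E \<Longrightarrow> x \<in> E"
proof -
  assume E: "is_clone E" and x: "x \<in> Clo E"
  from x show "x \<in> E"
  proof (induction rule: Clo.induct)
    case (proj i m) then show ?case using E by (auto simp: is_clone_def)
  next
    case (comp n f gs m)
    have "\<forall>g\<in>set gs. (m, g) \<in> E" using comp by blast
    then show ?case using E comp(1,2) unfolding is_clone_def by blast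
  qed
qed

lemma clone_Clo_sub: "is_clone E \<Longrightarrow> Clo E \<subseteq> E" using clone_Clo_sub0 by blast

lemma clone_norm: "is_clone E \<Longrightarrow> (n, f) \<in> E \<Longrightarrow> 0 < n \<and> (\<forall>xs. length xs \<noteq> n \<longrightarrow> f xs = undefined)"
  unfolding is_clone_def by (drule conjunct1, drule bspec, assumption, simp)

lemma map_projs: "length xs = n \<Longrightarrow> map (\<lambda>g. g xs) (map (\<lambda>i. snd (proj_op n i)) [0..<n]) = xs"
  by (auto simp: proj_op_def intro: nth_equalityI)

lemma comp_projs_norm:
  assumes "\<forall>xs. length xs \<noteq> n \<longrightarrow> f xs = undefined"
  shows "comp_op f n (map (\<lambda>i. snd (proj_op n i)) [0..<n]) = (n, f)"
proof -
  have "\<And>xs. (if length xs = n then f (map (\<lambda>g. g xs) (map (\<lambda>i. snd (proj_op n i)) [0..<n])) else undefined) = f xs"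
  proof -
    fix xs show "?thesis xs"
    proof (cases "length xs = n")
      case True then show ?thesis using map_projs[OF True] by simp
    next
      case False then show ?thesis using assms by simp
    qed
  qed
  then show ?thesis unfolding comp_op_def by (simp only: fun_eq_iff)
qed

lemma op_in_Clo:
  assumes "(n, f) \<in> F" "0 < n"
  shows "comp_op f n (map (\<lambda>i. snd (proj_op n i)) [0..<n]) \<in> Clo F"
  using assms by (intro Clo.comp) (auto simp: proj_op_def intro!: Clo.proj[of _ n, unfolded proj_op_def])

lemma clone_sub_Clo: assumes E: "is_clone E" shows "E \<subseteq> Clo E"
proof (rule subsetI)
  fix x assume x: "x \<in> E"
  obtain n f where x': "x = (n, f)" by force
  have nf: "(n, f) \<in> E" using x x' by simp
  have "0 < n" using clone_norm[OF E nf] by simp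
  have "\<forall>xs. length xs \<noteq> n \<longrightarrow> f xs = undefined" using clone_norm[OF E nf] by simp
  then have "comp_op f n (map (\<lambda>i. snd (proj_op n i)) [0..<n]) = (n, f)" by (rule comp_projs_norm)
  moreover have "comp_op f n (map (\<lambda>i. snd (proj_op n i)) [0..<n]) \<in> Clo E"
    by (rule op_in_Clo[OF nf \<open>0 < n\<close>])
  ultimately show "x \<in> Clo E" unfolding x' by (simp only:)
qed

lemma clone_Clo: "is_clone E \<Longrightarrow> Clo E = E"
  by (rule equalityI[OF clone_Clo_sub clone_sub_Clo])

lemma Clo_Clo: "Clo (Clo F) = Clo F" by (rule clone_Clo[OF is_clone_Clo])

lemma ball_pair_iff: "(\<forall>(n, f)\<in>F. P n f) \<longleftrightarrow> (\<forall>n f. (n, f) \<in> F \<longrightarrow> P n f)"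
  by (simp add: Ball_def)

definition pres :: "'a operation \<Rightarrow> 'a rel \<Rightarrow> bool" where
  "pres x \<theta> \<longleftrightarrow> (\<forall>xs ys. length xs = fst x \<longrightarrow> length ys = fst x \<longrightarrow>
        list_all2 (\<lambda>x y. (x, y) \<in> \<theta>) xs ys \<longrightarrow> (snd x xs, snd x ys) \<in> \<theta>)"

lemma Con_iff: "\<theta> \<in> Con F \<longleftrightarrow> equiv UNIV \<theta> \<and> (\<forall>x\<in>F. pres x \<theta>)"
  unfolding Con_def pres_def ball_pair_iff by (simp add: Ball_def)

lemma Clo_pres: assumes th: "\<theta> \<in> Con F" and x: "x \<in> Clo F" shows "pres x \<theta>"
proof -
  have eq: "equiv UNIV \<theta>" and F: "\<forall>x\<in>F. pres x \<theta>" using th by (auto simp: Con_iff)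
  from x show ?thesis
  proof (induction rule: Clo.induct)
    case (proj i m)
    then show ?case using eq by (auto simp: pres_def proj_op_def list_all2_conv_all_nth equiv_def refl_on_def)
  next
    case (comp n f gs m)
    show ?case unfolding pres_def
    proof (intro allI impI)
      fix xs ys assume l: "length xs = fst (comp_op f m gs)" "length ys = fst (comp_op f m gs)"
        and r: "list_all2 (\<lambda>x y. (x, y) \<in> \<theta>) xs ys"
      have lm: "length xs = m" "length ys = m" using l by (auto simp: comp_op_def)
      have "\<forall>g\<in>set gs. (g xs, g ys) \<in> \<theta>"
      proof
        fix g assume "g \<in> set gs"
        then have "pres (m, g) \<theta>" using comp(4) by blast
        then show "(g xs, g ys) \<in> \<theta>" using lm r by (simp add: pres_def)
      qed
      then have "list_all2 (\<lambda>x y. (x, y) \<in> \<theta>) (map (\<lambda>g. g xs) gs) (map (\<lambda>g. g ys) gs)"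
        by (simp add: list_all2_conv_all_nth)
      moreover have "pres (n, f) \<theta>" using F comp(1) by blast
      ultimately have "(f (map (\<lambda>g. g xs) gs), f (map (\<lambda>g. g ys) gs)) \<in> \<theta>"
        using comp(2) by (simp add: pres_def)
      then show "(snd (comp_op f m gs) xs, snd (comp_op f m gs) ys) \<in> \<theta>"
        using lm by (simp add: comp_op_def)
    qed
  qed
qed

lemma op_pres_from_Clo:
  assumes x: "(n, f) \<in> F" and th: "\<forall>y\<in>Clo F. pres y \<theta>" and eq: "equiv UNIV \<theta>"
  shows "pres (n, f) \<theta>"
proof (cases "n = 0")
  case True then show ?thesis using eq by (simp add: pres_def equiv_def refl_on_def)
next
  case False
  let ?g = "comp_op f n (map (\<lambda>i. snd (proj_op n i)) [0..<n])"
  have "?g \<in> Clo F" using op_in_Clo x False by blast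
  then have p: "pres ?g \<theta>" using th by blast
  have "\<And>zs. length zs = n \<Longrightarrow> snd ?g zs = f zs"
  proof -
    fix zs :: "'a list" assume l: "length zs = n"
    show "snd ?g zs = f zs" using map_projs[OF l] l by (simp add: comp_op_def del: map_map)
  qed
  then show ?thesis using p by (simp add: pres_def comp_op_def)
qed

lemma Con_Clo: "Con (Clo F) = Con F"
proof (intro equalityI subsetI)
  fix \<theta> assume th: "\<theta> \<in> Con (Clo F)"
  then have eq: "equiv UNIV \<theta>" and p: "\<forall>y\<in>Clo F. pres y \<theta>" by (auto simp: Con_iff)
  have "\<forall>x\<in>F. pres x \<theta>"
  proof
    fix x assume "x \<in> F"
    then show "pres x \<theta>" using op_pres_from_Clo[of "fst x" "snd x" F \<theta>] p eq by simp
  qed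
  then show "\<theta> \<in> Con F" using eq by (simp add: Con_iff)
next
  fix \<theta> assume th: "\<theta> \<in> Con F"
  have "equiv UNIV \<theta>" using th by (simp add: Con_iff)
  then show "\<theta> \<in> Con (Clo F)" using Clo_pres[OF th] by (simp add: Con_iff)
qed

lemma clone_comp: "is_clone E \<Longrightarrow> (n, f) \<in> E \<Longrightarrow> length gs = n \<Longrightarrow> \<forall>g\<in>set gs. (m, g) \<in> E
   \<Longrightarrow> comp_op f m gs \<in> E"
  unfolding is_clone_def by (drule conjunct2, drule conjunct2, blast)

lemma clone_proj: "is_clone E \<Longrightarrow> i < m \<Longrightarrow> proj_op m i \<in> E"
  unfolding is_clone_def by (drule conjunct2, drule conjunct1, blast)

type_synonym 'a cube = "(nat \<Rightarrow> bool) \<Rightarrow> 'a"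

lemma list_choice: "\<forall>i<n. \<exists>x. P i x \<Longrightarrow> \<exists>xs. length xs = n \<and> (\<forall>i<n. P i (xs ! i))"
proof -
  assume h: "\<forall>i<n. \<exists>x. P i x"
  let ?xs = "map (\<lambda>i. SOME x. P i x) [0..<n]"
  have "\<forall>i<n. P i (?xs ! i)" using h by (auto intro: someI_ex)
  then show ?thesis by (intro exI[of _ ?xs]) simp
qed

lemma minor:
  fixes E :: "'a operation set"
  assumes E: "is_clone E" and t: "(m, t) \<in> E" and M: "\<forall>p<m. \<pi> p < M"
  shows "\<exists>g. (M, g) \<in> E \<and> (\<forall>xs. length xs = M \<longrightarrow> g xs = t (map (\<lambda>p. xs ! \<pi> p) [0..<m]))"
proof -
  let ?gs = "map (\<lambda>p. snd (proj_op M (\<pi> p))) [0..<m]"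
  have "\<forall>g\<in>set ?gs. (M, g) \<in> E"
  proof
    fix g :: "'a list \<Rightarrow> 'a" assume "g \<in> set ?gs"
    then obtain p where p: "p < m" "g = snd (proj_op M (\<pi> p))" by auto
    have "proj_op M (\<pi> p) \<in> E" using clone_proj[OF E] M p by blast
    then show "(M, g) \<in> E" using p by (simp add: proj_op_def)
  qed
  then have "comp_op t M ?gs \<in> E" using clone_comp[OF E t] by simp
  moreover have "\<forall>xs. length xs = M \<longrightarrow> snd (comp_op t M ?gs) xs = t (map (\<lambda>p. xs ! \<pi> p) [0..<m])"
    by (simp add: comp_op_def proj_op_def o_def)
  ultimately show ?thesis by (intro exI[of _ "snd (comp_op t M ?gs)"]) (simp add: comp_op_def)
qed

lemma multi:
  fixes E :: "'a operation set" and L :: "(('a list \<Rightarrow> 'a) \<times> 'a cube list) list"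
  assumes E: "is_clone E" and L: "\<forall>p\<in>set L. (length (snd p), fst p) \<in> E"
  shows "\<exists>gs. length gs = length L \<and> (\<forall>g\<in>set gs. (length (concat (map snd L)), g) \<in> E) \<and>
    (\<forall>s. map (\<lambda>g. g (map (\<lambda>k. k s) (concat (map snd L)))) gs = map (\<lambda>p. fst p (map (\<lambda>k. k s) (snd p))) L)"
  using L
proof (induction L)
  case Nil then show ?case by simp
next
  case (Cons p L)
  obtain gs' where gs': "length gs' = length L" "\<forall>g\<in>set gs'. (length (concat (map snd L)), g) \<in> E"
    "\<forall>s. map (\<lambda>g. g (map (\<lambda>k. k s) (concat (map snd L)))) gs' = map (\<lambda>p. fst p (map (\<lambda>k. k s) (snd p))) L"
    using Cons by auto
  define m0 where "m0 = length (snd p)"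
  define M' where "M' = length (concat (map snd L))"
  have pE: "(m0, fst p) \<in> E" using Cons.prems m0_def by simp
  have Mc: "length (concat (map snd (p # L))) = m0 + M'" by (simp add: m0_def M'_def)
  obtain g0 where g0: "(m0 + M', g0) \<in> E" "\<forall>xs. length xs = m0 + M' \<longrightarrow> g0 xs = fst p (map (\<lambda>q. xs ! q) [0..<m0])"
    using minor[OF E pE, of "\<lambda>q. q" "m0 + M'"] by auto
  have "\<forall>i<length gs'. \<exists>g. (m0 + M', g) \<in> E \<and> (\<forall>xs. length xs = m0 + M' \<longrightarrow> g xs = (gs' ! i) (map (\<lambda>q. xs ! (q + m0)) [0..<M']))"
  proof (intro allI impI)
    fix i assume i: "i < length gs'"
    then have "(M', gs' ! i) \<in> E" using gs'(2) M'_def by simp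
    from minor[OF E this, of "\<lambda>q. q + m0" "m0 + M'"] show "\<exists>g. (m0 + M', g) \<in> E \<and> (\<forall>xs. length xs = m0 + M' \<longrightarrow> g xs = (gs' ! i) (map (\<lambda>q. xs ! (q + m0)) [0..<M']))"
      by auto
  qed
  from list_choice[OF this] obtain hs where hs: "length hs = length gs'"
    "\<forall>i<length gs'. (m0 + M', hs ! i) \<in> E \<and> (\<forall>xs. length xs = m0 + M' \<longrightarrow> (hs ! i) xs = (gs' ! i) (map (\<lambda>q. xs ! (q + m0)) [0..<M']))"
    by blast
  show ?case
  proof (intro exI[of _ "g0 # hs"] conjI)
    show "length (g0 # hs) = length (p # L)" using hs gs' by simp
    show "\<forall>g\<in>set (g0 # hs). (length (concat (map snd (p # L))), g) \<in> E"
      unfolding Mc using g0 hs by (auto simp: in_set_conv_nth)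
    show "\<forall>s. map (\<lambda>g. g (map (\<lambda>k. k s) (concat (map snd (p # L))))) (g0 # hs) =
      map (\<lambda>p. fst p (map (\<lambda>k. k s) (snd p))) (p # L)"
    proof
      fix s
      let ?xs = "map (\<lambda>k. k s) (concat (map snd (p # L)))"
      have lx: "length ?xs = m0 + M'" using Mc by simp
      have xs: "?xs = map (\<lambda>k. k s) (snd p) @ map (\<lambda>k. k s) (concat (map snd L))" by simp
      have 1: "map (\<lambda>q. ?xs ! q) [0..<m0] = map (\<lambda>k. k s) (snd p)"
        unfolding xs by (rule nth_equalityI) (auto simp: m0_def nth_append)
      have 2: "map (\<lambda>q. ?xs ! (q + m0)) [0..<M'] = map (\<lambda>k. k s) (concat (map snd L))"
        unfolding xs by (rule nth_equalityI) (auto simp: m0_def M'_def nth_append)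
      have "map (\<lambda>g. g ?xs) hs = map (\<lambda>p. fst p (map (\<lambda>k. k s) (snd p))) L"
      proof (rule nth_equalityI)
        show "length (map (\<lambda>g. g ?xs) hs) = length (map (\<lambda>p. fst p (map (\<lambda>k. k s) (snd p))) L)"
          using hs gs' by simp
        fix i assume "i < length (map (\<lambda>g. g ?xs) hs)"
        then have i: "i < length gs'" using hs by simp
        have "(hs ! i) ?xs = (gs' ! i) (map (\<lambda>k. k s) (concat (map snd L)))"
          using hs(2) i lx 2 by simp
        also have "\<dots> = map (\<lambda>g. g (map (\<lambda>k. k s) (concat (map snd L)))) gs' ! i" using i by simp
        also have "\<dots> = map (\<lambda>p. fst p (map (\<lambda>k. k s) (snd p))) L ! i" using gs'(3) by simp
        finally show "map (\<lambda>g. g ?xs) hs ! i = map (\<lambda>p. fst p (map (\<lambda>k. k s) (snd p))) L ! i"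
          using i hs by simp
      qed
      moreover have "g0 ?xs = fst p (map (\<lambda>k. k s) (snd p))" using g0(2) lx 1 by simp
      ultimately show "map (\<lambda>g. g ?xs) (g0 # hs) = map (\<lambda>p. fst p (map (\<lambda>k. k s) (snd p))) (p # L)"
        by simp
    qed
  qed
qed

definition coc :: "nat \<Rightarrow> 'a \<Rightarrow> 'a \<Rightarrow> 'a cube" where
  "coc i a b = (\<lambda>s. if s i then b else a)"

definition isco :: "'a rel list \<Rightarrow> 'a cube \<Rightarrow> bool" where
  "isco \<alpha> k \<longleftrightarrow> (\<exists>i a b. i < length \<alpha> \<and> (a, b) \<in> \<alpha> ! i \<and> k = coc i a b)"

definition Mc :: "'a operation set \<Rightarrow> 'a rel list \<Rightarrow> 'a cube set" where
  "Mc E \<alpha> = {c. \<exists>t ks. (length ks, t) \<in> E \<and> (\<forall>k\<in>set ks. isco \<alpha> k) \<and> c = (\<lambda>s. t (map (\<lambda>k. k s) ks))}"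

lemma Mc_closed:
  assumes E: "is_clone E" and f: "(m, f) \<in> E" and l: "length cs = m" and cs: "set cs \<subseteq> Mc E \<alpha>"
  shows "(\<lambda>s. f (map (\<lambda>c. c s) cs)) \<in> Mc E \<alpha>"
proof -
  let ?P = "\<lambda>c p. (length (snd p), fst p) \<in> E \<and> (\<forall>k\<in>set (snd p). isco \<alpha> k) \<and> c = (\<lambda>s. fst p (map (\<lambda>k. k s) (snd p)))"
  have "\<forall>i<length cs. \<exists>p. ?P (cs ! i) p"
  proof (intro allI impI)
    fix i assume "i < length cs"
    then have "cs ! i \<in> Mc E \<alpha>" using cs by auto
    then obtain t ks where "(length ks, t) \<in> E" "\<forall>k\<in>set ks. isco \<alpha> k" "cs ! i = (\<lambda>s. t (map (\<lambda>k. k s) ks))"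
      unfolding Mc_def by blast
    then show "\<exists>p. ?P (cs ! i) p" by (intro exI[of _ "(t, ks)"]) simp
  qed
  from list_choice[OF this] obtain L where L: "length L = length cs" "\<forall>i<length cs. ?P (cs ! i) (L ! i)" by blast
  have "\<forall>p\<in>set L. (length (snd p), fst p) \<in> E"
  proof
    fix p assume "p \<in> set L"
    then obtain i where "i < length L" "p = L ! i" by (auto simp: in_set_conv_nth)
    then show "(length (snd p), fst p) \<in> E" using L by simp
  qed
  from multi[OF E this] obtain gs where gs: "length gs = length L"
    "\<forall>g\<in>set gs. (length (concat (map snd L)), g) \<in> E"
    "\<forall>s. map (\<lambda>g. g (map (\<lambda>k. k s) (concat (map snd L)))) gs = map (\<lambda>p. fst p (map (\<lambda>k. k s) (snd p))) L"
    by blast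
  let ?M = "length (concat (map snd L))"
  have cE: "comp_op f ?M gs \<in> E" using clone_comp[OF E f] gs L l by simp
  show ?thesis unfolding Mc_def
  proof (intro CollectI exI conjI)
    show "(length (concat (map snd L)), snd (comp_op f ?M gs)) \<in> E" using cE by (simp add: comp_op_def)
    show "\<forall>k\<in>set (concat (map snd L)). isco \<alpha> k"
    proof
      fix k assume "k \<in> set (concat (map snd L))"
      then obtain p where "p \<in> set L" "k \<in> set (snd p)" by auto
      then obtain i where "i < length L" "p = L ! i" by (auto simp: in_set_conv_nth)
      then show "isco \<alpha> k" using L \<open>k \<in> set (snd p)\<close> by simp
    qed
    show "(\<lambda>s. f (map (\<lambda>c. c s) cs)) = (\<lambda>s. snd (comp_op f ?M gs) (map (\<lambda>k. k s) (concat (map snd L))))"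
    proof
      fix s
      have "map (\<lambda>c. c s) cs = map (\<lambda>p. fst p (map (\<lambda>k. k s) (snd p))) L"
      proof (rule nth_equalityI)
        show "length (map (\<lambda>c. c s) cs) = length (map (\<lambda>p. fst p (map (\<lambda>k. k s) (snd p))) L)" using L by simp
        fix i assume "i < length (map (\<lambda>c. c s) cs)"
        then have i: "i < length cs" by simp
        then have "cs ! i = (\<lambda>s. fst (L ! i) (map (\<lambda>k. k s) (snd (L ! i))))" using L by blast
        then show "map (\<lambda>c. c s) cs ! i = map (\<lambda>p. fst p (map (\<lambda>k. k s) (snd p))) L ! i" using i L by simp
      qed
      then show "f (map (\<lambda>c. c s) cs) = snd (comp_op f ?M gs) (map (\<lambda>k. k s) (concat (map snd L)))"
        using gs(3) by (simp add: comp_op_def)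
    qed
  qed
qed

lemma Mc_reindex:
  assumes c: "c \<in> Mc E \<alpha>" and h: "\<And>k. isco \<alpha> k \<Longrightarrow> isco \<beta> (\<lambda>s. k (\<phi> s))"
  shows "(\<lambda>s. c (\<phi> s)) \<in> Mc E \<beta>"
proof -
  obtain t ks where tks: "(length ks, t) \<in> E" "\<forall>k\<in>set ks. isco \<alpha> k" "c = (\<lambda>s. t (map (\<lambda>k. k s) ks))"
    using c unfolding Mc_def by blast
  show ?thesis unfolding Mc_def
  proof (intro CollectI exI conjI)
    show "(length (map (\<lambda>k s. k (\<phi> s)) ks), t) \<in> E" using tks by simp
    show "\<forall>k\<in>set (map (\<lambda>k s. k (\<phi> s)) ks). isco \<beta> k" using tks h by auto
    show "(\<lambda>s. c (\<phi> s)) = (\<lambda>s. t (map (\<lambda>k. k s) (map (\<lambda>k s. k (\<phi> s)) ks)))" using tks by (simp add: o_def)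
  qed
qed

lemma Mc_coord:
  assumes E: "is_clone E" and k: "isco \<alpha> k" shows "k \<in> Mc E \<alpha>"
  unfolding Mc_def
proof (intro CollectI exI conjI)
  show "(length [k], snd (proj_op 1 0)) \<in> E" using clone_proj[OF E, of 0 1] by (simp add: proj_op_def)
  show "\<forall>k\<in>set [k]. isco \<alpha> k" using k by simp
  show "k = (\<lambda>s. snd (proj_op 1 0) (map (\<lambda>k. k s) [k]))" by (simp add: proj_op_def)
qed

lemma Mc_const:
  assumes E: "is_clone E" and a: "\<alpha> \<noteq> []" and r: "(x, x) \<in> \<alpha> ! 0" shows "(\<lambda>s. x) \<in> Mc E \<alpha>"
proof -
  have "isco \<alpha> (coc 0 x x)" using a r unfolding isco_def by blast
  moreover have "coc 0 x x = (\<lambda>s. x)" by (simp add: coc_def)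
  ultimately show ?thesis using Mc_coord[OF E] by metis
qed

definition dep :: "nat \<Rightarrow> 'a cube \<Rightarrow> bool" where
  "dep n c \<longleftrightarrow> (\<forall>s s'. (\<forall>j<n. s j = s' j) \<longrightarrow> c s = c s')"

lemma Mc_dep: assumes "c \<in> Mc E \<alpha>" shows "dep (length \<alpha>) c"
proof -
  obtain t ks where tks: "\<forall>k\<in>set ks. isco \<alpha> k" "c = (\<lambda>s. t (map (\<lambda>k. k s) ks))"
    using assms unfolding Mc_def by blast
  show ?thesis unfolding dep_def
  proof (intro allI impI)
    fix s s' :: "nat \<Rightarrow> bool" assume h: "\<forall>j<length \<alpha>. s j = s' j"
    have "map (\<lambda>k. k s) ks = map (\<lambda>k. k s') ks"
    proof (rule map_cong[OF refl])
      fix k assume "k \<in> set ks"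
      then obtain i a b where "i < length \<alpha>" "k = coc i a b" using tks unfolding isco_def by blast
      then show "k s = k s'" using h by (simp add: coc_def)
    qed
    then show "c s = c s'" using tks(2) by (simp del: map_eq_conv)
  qed
qed

definition Kc :: "nat \<Rightarrow> 'a \<Rightarrow> 'a \<Rightarrow> 'a cube" where
  "Kc n u v = (\<lambda>s. if (\<forall>j<n. s j) then v else u)"

definition thetaE :: "'a operation set \<Rightarrow> 'a rel list \<Rightarrow> 'a rel" where
  "thetaE E \<alpha> = {(u, v). Kc (length \<alpha>) u v \<in> Mc E \<alpha>}"

definition Lj :: "nat \<Rightarrow> 'a cube \<Rightarrow> 'a cube" where
  "Lj j d = (\<lambda>s. d (s(j := False)))"

definition eqrels :: "'a rel list \<Rightarrow> bool" where
  "eqrels \<alpha> \<longleftrightarrow> (\<forall>i<length \<alpha>. equiv UNIV (\<alpha> ! i))"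

lemma eqrels_refl: "eqrels \<alpha> \<Longrightarrow> i < length \<alpha> \<Longrightarrow> (x, x) \<in> \<alpha> ! i"
  unfolding eqrels_def equiv_def refl_on_def by blast

lemma eqrels_sym: "eqrels \<alpha> \<Longrightarrow> i < length \<alpha> \<Longrightarrow> (x, y) \<in> \<alpha> ! i \<Longrightarrow> (y, x) \<in> \<alpha> ! i"
  unfolding eqrels_def equiv_def sym_def by blast

locale mal =
  fixes E :: "'a operation set" and qf :: "'a list \<Rightarrow> 'a"
  assumes E: "is_clone E" and qE: "(3, qf) \<in> E"
    and q1: "\<And>x y. qf [x, x, y] = y" and q2: "\<And>x y. qf [y, x, x] = y"
begin

lemma q_closed:
  assumes "c1 \<in> Mc E \<alpha>" "c2 \<in> Mc E \<alpha>" "c3 \<in> Mc E \<alpha>"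
  shows "(\<lambda>s. qf [c1 s, c2 s, c3 s]) \<in> Mc E \<alpha>"
  using Mc_closed[OF E qE, of "[c1, c2, c3]" \<alpha>] assms by simp

lemma Lj_closed:
  assumes "eqrels \<alpha>" "c \<in> Mc E \<alpha>" shows "Lj j c \<in> Mc E \<alpha>"
  unfolding Lj_def
proof (rule Mc_reindex[OF assms(2)])
  fix k assume "isco \<alpha> k"
  then obtain i a b where k: "i < length \<alpha>" "(a, b) \<in> \<alpha> ! i" "k = coc i a b" unfolding isco_def by blast
  show "isco \<alpha> (\<lambda>s. k (s(j := False)))"
  proof (cases "i = j")
    case True
    then have "(\<lambda>s. k (s(j := False))) = coc i a a" using k by (auto simp: coc_def)
    then show ?thesis using k eqrels_refl[OF assms(1) k(1)] unfolding isco_def by blast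
  next
    case False
    then have "(\<lambda>s. k (s(j := False))) = coc i a b" using k by (auto simp: coc_def)
    then show ?thesis using k unfolding isco_def by blast
  qed
qed

definition flipw :: "(nat \<Rightarrow> bool) \<Rightarrow> (nat \<Rightarrow> bool) \<Rightarrow> (nat \<Rightarrow> bool)" where
  "flipw w s = (\<lambda>j. if w j then s j else \<not> s j)"

lemma flip_closed:
  assumes "eqrels \<alpha>" "c \<in> Mc E \<alpha>" shows "(\<lambda>s. c (flipw w s)) \<in> Mc E \<alpha>"
proof (rule Mc_reindex[OF assms(2)])
  fix k assume "isco \<alpha> k"
  then obtain i a b where k: "i < length \<alpha>" "(a, b) \<in> \<alpha> ! i" "k = coc i a b" unfolding isco_def by blast
  show "isco \<alpha> (\<lambda>s. k (flipw w s))"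
  proof (cases "w i")
    case True
    then have "(\<lambda>s. k (flipw w s)) = coc i a b" using k by (auto simp: coc_def flipw_def)
    then show ?thesis using k unfolding isco_def by blast
  next
    case False
    then have "(\<lambda>s. k (flipw w s)) = coc i b a" using k by (auto simp: coc_def flipw_def)
    then show ?thesis using k eqrels_sym[OF assms(1) k(1,2)] unfolding isco_def by blast
  qed
qed

lemma const_closed: assumes "\<alpha> \<noteq> []" "eqrels \<alpha>" shows "(\<lambda>s. x) \<in> Mc E \<alpha>"
proof -
  have "(x, x) \<in> \<alpha> ! 0" using eqrels_refl[OF assms(2)] assms(1) by simp
  then show ?thesis by (rule Mc_const[OF E assms(1)])
qed

lemma Kc_same: "Kc n u u = (\<lambda>s. u)" by (simp add: Kc_def)

lemma theta_Con:
  assumes ne: "\<alpha> \<noteq> []" and eq: "eqrels \<alpha>"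
  shows "thetaE E \<alpha> \<in> Con E"
proof -
  let ?n = "length \<alpha>"
  let ?th = "thetaE E \<alpha>"
  have rfl: "(u, u) \<in> ?th" for u
    unfolding thetaE_def using const_closed[OF ne eq] by (simp add: Kc_same)
  have sm: "(v, u) \<in> ?th" if "(u, v) \<in> ?th" for u v
  proof -
    have "(\<lambda>s. qf [Kc ?n v v s, Kc ?n u v s, Kc ?n u u s]) \<in> Mc E \<alpha>"
      using q_closed that rfl unfolding thetaE_def by blast
    moreover have "(\<lambda>s. qf [Kc ?n v v s, Kc ?n u v s, Kc ?n u u s]) = Kc ?n v u"
      by (rule ext) (auto simp: Kc_def q1 q2)
    ultimately show ?thesis unfolding thetaE_def by simp
  qed
  have tr: "(u, w) \<in> ?th" if "(u, v) \<in> ?th" "(v, w) \<in> ?th" for u v w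
  proof -
    have "(\<lambda>s. qf [Kc ?n u v s, Kc ?n v v s, Kc ?n v w s]) \<in> Mc E \<alpha>"
      using q_closed that rfl unfolding thetaE_def by blast
    moreover have "(\<lambda>s. qf [Kc ?n u v s, Kc ?n v v s, Kc ?n v w s]) = Kc ?n u w"
      by (rule ext) (auto simp: Kc_def q1 q2)
    ultimately show ?thesis unfolding thetaE_def by simp
  qed
  have equiv: "equiv UNIV ?th"
  proof (unfold equiv_def, intro conjI)
    show "refl_on UNIV ?th" unfolding refl_on_def using rfl by simp
    show "sym ?th" unfolding sym_def using sm by blast
    show "trans ?th" unfolding trans_def using tr by blast
  qed simp
  have pres: "pres x ?th" if x: "x \<in> E" for x
    unfolding pres_def
  proof (intro allI impI)
    fix xs ys assume l: "length xs = fst x" "length ys = fst x"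
      and r: "list_all2 (\<lambda>x y. (x, y) \<in> ?th) xs ys"
    let ?cs = "map (\<lambda>(a, b). Kc ?n a b) (zip xs ys)"
    have "set ?cs \<subseteq> Mc E \<alpha>"
    proof
      fix c assume "c \<in> set ?cs"
      then obtain a b where "(a, b) \<in> set (zip xs ys)" "c = Kc ?n a b" by auto
      then have "(a, b) \<in> ?th" using r by (meson in_set_zipE list_all2_iff case_prodD)
      then show "c \<in> Mc E \<alpha>" using \<open>c = Kc ?n a b\<close> unfolding thetaE_def by simp
    qed
    moreover have xE: "(fst x, snd x) \<in> E" using x by simp
    ultimately have "(\<lambda>s. snd x (map (\<lambda>c. c s) ?cs)) \<in> Mc E \<alpha>"
      using Mc_closed[OF E xE, of ?cs] l by simp
    moreover have "(\<lambda>s. snd x (map (\<lambda>c. c s) ?cs)) = Kc ?n (snd x xs) (snd x ys)"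
    proof
      fix s
      have "map (\<lambda>c. c s) ?cs = (if (\<forall>j<?n. s j) then ys else xs)"
        using l by (auto simp: Kc_def intro!: nth_equalityI)
      then have mm: "snd x (map (\<lambda>c. c s) ?cs) = snd x (if (\<forall>j<?n. s j) then ys else xs)"
        by (rule arg_cong)
      show "snd x (map (\<lambda>c. c s) ?cs) = Kc ?n (snd x xs) (snd x ys) s"
        by (subst mm) (auto simp: Kc_def)
    qed
    ultimately show "(snd x xs, snd x ys) \<in> ?th" unfolding thetaE_def by simp
  qed
  show ?thesis using equiv pres by (simp add: Con_iff)
qed

end

context mal begin

lemma dep_eq: "dep n c \<Longrightarrow> (\<forall>j<n. s j = s' j) \<Longrightarrow> c s = c s'"
  unfolding dep_def by blast

lemma KM:
  assumes ne: "\<alpha> \<noteq> []" and eq: "eqrels \<alpha>" and c: "c \<in> Mc E \<alpha>" and c': "c' \<in> Mc E \<alpha>"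
    and agree: "\<And>s. \<not> (\<forall>j<length \<alpha>. s j) \<Longrightarrow> c s = c' s"
  shows "(c' (\<lambda>_. True), c (\<lambda>_. True)) \<in> thetaE E \<alpha>"
proof -
  let ?n = "length \<alpha>"
  let ?u = "c' (\<lambda>_. True)"
  have ce: "(\<lambda>s. ?u) \<in> Mc E \<alpha>" using const_closed[OF ne eq] .
  note q_closed[OF c c' ce]
  then have "(\<lambda>s. qf [c s, c' s, ?u]) \<in> Mc E \<alpha>" by simp
  moreover have "(\<lambda>s. qf [c s, c' s, ?u]) = Kc ?n ?u (c (\<lambda>_. True))"
  proof (rule ext)
    fix s
    show "qf [c s, c' s, ?u] = Kc ?n ?u (c (\<lambda>_. True)) s"
    proof (cases "\<forall>j<?n. s j")
      case True
      have "c s = c (\<lambda>_. True)" using dep_eq[OF Mc_dep[OF c], of s "\<lambda>_. True"] True by simp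
      moreover have "c' s = ?u" using dep_eq[OF Mc_dep[OF c'], of s "\<lambda>_. True"] True by simp
      ultimately show ?thesis using True by (simp add: Kc_def q2)
    next
      case False
      then show ?thesis using agree[OF False] by (auto simp: Kc_def q1)
    qed
  qed
  ultimately show ?thesis unfolding thetaE_def by simp
qed

lemma CM:
  assumes ne: "\<alpha> \<noteq> []" and eq: "eqrels \<alpha>" and c: "c \<in> Mc E \<alpha>" and th: "(c w, v) \<in> thetaE E \<alpha>"
  shows "(\<lambda>s. if (\<forall>j<length \<alpha>. s j = w j) then v else c s) \<in> Mc E \<alpha>"
proof -
  let ?n = "length \<alpha>"
  let ?u = "c w"
  have K: "Kc ?n ?u v \<in> Mc E \<alpha>" using th unfolding thetaE_def by simp
  note flip_closed[OF eq K, of w]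
  then have K': "(\<lambda>s. Kc ?n ?u v (flipw w s)) \<in> Mc E \<alpha>" by simp
  have ce: "(\<lambda>s. ?u) \<in> Mc E \<alpha>" using const_closed[OF ne eq] .
  note q_closed[OF c ce K']
  then have "(\<lambda>s. qf [c s, ?u, Kc ?n ?u v (flipw w s)]) \<in> Mc E \<alpha>" by simp
  moreover have "(\<lambda>s. qf [c s, ?u, Kc ?n ?u v (flipw w s)]) = (\<lambda>s. if (\<forall>j<?n. s j = w j) then v else c s)"
  proof (rule ext)
    fix s
    have fl: "(\<forall>j<?n. flipw w s j) = (\<forall>j<?n. s j = w j)" by (auto simp: flipw_def)
    show "qf [c s, ?u, Kc ?n ?u v (flipw w s)] = (if (\<forall>j<?n. s j = w j) then v else c s)"
    proof (cases "\<forall>j<?n. s j = w j")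
      case True
      have "c s = ?u" using dep_eq[OF Mc_dep[OF c], of s w] True by simp
      then have "Kc ?n ?u v (flipw w s) = v" using True fl by (simp add: Kc_def)
      then show ?thesis using True \<open>c s = ?u\<close> by (simp add: q1)
    next
      case False
      then have "\<not> (\<forall>j<?n. flipw w s j)" using fl by simp
      then have "Kc ?n ?u v (flipw w s) = ?u" unfolding Kc_def by (simp only: if_False)
      then show ?thesis by (subst if_not_P[OF False]) (simp add: q2)
    qed
  qed
  ultimately show ?thesis by simp
qed

definition canon :: "nat \<Rightarrow> (nat \<Rightarrow> bool) \<Rightarrow> (nat \<Rightarrow> bool)" where
  "canon n s = (\<lambda>j. j < n \<and> s j)"

lemma canon_eq: "canon n s = canon n s' \<longleftrightarrow> (\<forall>j<n. s j = s' j)"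
  unfolding canon_def fun_eq_iff by auto

lemma finite_canon: "finite (range (canon n))"
proof (rule finite_subset)
  show "range (canon n) \<subseteq> (\<lambda>S j. j \<in> S) ` Pow {..<n}"
  proof
    fix x assume "x \<in> range (canon n)"
    then obtain s where "x = canon n s" by auto
    then have "x = (\<lambda>j. j \<in> {j. j < n \<and> s j})" by (simp add: canon_def)
    then show "x \<in> (\<lambda>S j. j \<in> S) ` Pow {..<n}" by blast
  qed
  show "finite ((\<lambda>S j. j \<in> S) ` Pow {..<n})" by simp
qed

lemma perturb_W:
  assumes ne: "\<alpha> \<noteq> []" and eq: "eqrels \<alpha>" and c: "c \<in> Mc E \<alpha>" and W: "finite W"
  shows "\<forall>e. dep (length \<alpha>) e \<and> (\<forall>s. (c s, e s) \<in> thetaE E \<alpha>) \<and> (\<forall>s. canon (length \<alpha>) s \<notin> W \<longrightarrow> e s = c s)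
     \<longrightarrow> e \<in> Mc E \<alpha>"
  using W
proof (induction W rule: finite_induct)
  case empty
  show ?case
  proof (intro allI impI)
    fix e assume "dep (length \<alpha>) e \<and> (\<forall>s. (c s, e s) \<in> thetaE E \<alpha>) \<and> (\<forall>s. canon (length \<alpha>) s \<notin> {} \<longrightarrow> e s = c s)"
    then have "e = c" by auto
    then show "e \<in> Mc E \<alpha>" using c by simp
  qed
next
  case (insert w W)
  let ?n = "length \<alpha>"
  show ?case
  proof (intro allI impI)
    fix e assume h: "dep ?n e \<and> (\<forall>s. (c s, e s) \<in> thetaE E \<alpha>) \<and> (\<forall>s. canon ?n s \<notin> insert w W \<longrightarrow> e s = c s)"
    define e' where "e' = (\<lambda>s. if canon ?n s = w then c s else e s)"
    have thr: "(x, x) \<in> thetaE E \<alpha>" for x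
      using const_closed[OF ne eq] by (simp add: thetaE_def Kc_same)
    have "dep ?n e'"
      unfolding dep_def e'_def
    proof (intro allI impI)
      fix s s' :: "nat \<Rightarrow> bool" assume a: "\<forall>j<?n. s j = s' j"
      then have "canon ?n s = canon ?n s'" using canon_eq by blast
      moreover have "c s = c s'" using dep_eq[OF Mc_dep[OF c] a] .
      moreover have "e s = e s'" using dep_eq[OF _ a] h by blast
      ultimately show "(if canon ?n s = w then c s else e s) = (if canon ?n s' = w then c s' else e s')" by simp
    qed
    moreover have "\<forall>s. (c s, e' s) \<in> thetaE E \<alpha>" using h thr by (simp add: e'_def)
    moreover have "\<forall>s. canon ?n s \<notin> W \<longrightarrow> e' s = c s" using h by (simp add: e'_def)
    ultimately have e'M: "e' \<in> Mc E \<alpha>" using insert.IH by blast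
    show "e \<in> Mc E \<alpha>"
    proof (cases "\<exists>s0. canon ?n s0 = w")
      case False
      then have "e' = e" by (auto simp: e'_def)
      then show ?thesis using e'M by simp
    next
      case True
      then obtain s0 where s0: "canon ?n s0 = w" by blast
      have "(e' s0, e s0) \<in> thetaE E \<alpha>" using h s0 by (simp add: e'_def)
      from CM[OF ne eq e'M this] have "(\<lambda>s. if (\<forall>j<?n. s j = s0 j) then e s0 else e' s) \<in> Mc E \<alpha>" .
      moreover have "(\<lambda>s. if (\<forall>j<?n. s j = s0 j) then e s0 else e' s) = e"
      proof (rule ext)
        fix s
        show "(if (\<forall>j<?n. s j = s0 j) then e s0 else e' s) = e s"
        proof (cases "\<forall>j<?n. s j = s0 j")
          case True
          have "dep ?n e" using h by blast
          from dep_eq[OF this True] have "e s = e s0" .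
          then show ?thesis by (subst if_P[OF True]) simp
        next
          case False
          then have "canon ?n s \<noteq> canon ?n s0" unfolding canon_eq .
          then have "canon ?n s \<noteq> w" using s0 by simp
          then show ?thesis by (subst if_not_P[OF False]) (simp add: e'_def)
        qed
      qed
      ultimately show ?thesis by simp
    qed
  qed
qed

lemma perturb:
  assumes ne: "\<alpha> \<noteq> []" and eq: "eqrels \<alpha>" and c: "c \<in> Mc E \<alpha>" and d: "dep (length \<alpha>) e"
    and th: "\<And>s. (c s, e s) \<in> thetaE E \<alpha>"
  shows "e \<in> Mc E \<alpha>"
  using perturb_W[OF ne eq c finite_canon[of "length \<alpha>"]] d th by blast

end

lemma mapzip_coc: "length xs = length ys \<Longrightarrow>
  map (\<lambda>k. k s) (map (\<lambda>(a, b). coc i a b) (zip xs ys)) = (if s i then ys else xs)"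
proof (induction xs arbitrary: ys)
  case Nil then show ?case by simp
next
  case (Cons a xs)
  then obtain b ys' where "ys = b # ys'" "length xs = length ys'" by (cases ys) auto
  then show ?case using Cons.IH[of ys'] by (simp add: coc_def)
qed

lemma length_concat_uniform: "(\<forall>i<n. length (g i) = L) \<Longrightarrow> length (concat (map g [0..<n])) = n * L"
  by (induction n) auto

lemma concat_nth_uniform:
  "(\<forall>i<n. length (g i) = L) \<Longrightarrow> i < n \<Longrightarrow> p < L \<Longrightarrow> concat (map g [0..<n]) ! (i * L + p) = g i ! p"
proof (induction n)
  case 0 then show ?case by simp
next
  case (Suc n)
  have l: "length (concat (map g [0..<n])) = n * L" using Suc.prems(1) length_concat_uniform[of n g L] by simp
  show ?case
  proof (cases "i < n")
    case True
    have "i * L + p < n * L"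
    proof -
      have "i * L + p < i * L + L" using Suc.prems by simp
      also have "\<dots> = Suc i * L" by simp
      also have "\<dots> \<le> n * L" using True by (intro mult_right_mono) auto
      finally show ?thesis .
    qed
    then show ?thesis using Suc True l by (simp add: nth_append)
  next
    case False
    then have "i = n" using Suc by simp
    then show ?thesis using l Suc.prems by (simp add: nth_append)
  qed
qed

context mal begin

lemma th_equiv: "\<alpha> \<noteq> [] \<Longrightarrow> eqrels \<alpha> \<Longrightarrow> equiv UNIV (thetaE E \<alpha>)"
  using theta_Con by (simp add: Con_iff)

lemma th_refl: "\<alpha> \<noteq> [] \<Longrightarrow> eqrels \<alpha> \<Longrightarrow> (x, x) \<in> thetaE E \<alpha>"
  using th_equiv unfolding equiv_def refl_on_def by blast

lemma th_sym: "\<alpha> \<noteq> [] \<Longrightarrow> eqrels \<alpha> \<Longrightarrow> (x, y) \<in> thetaE E \<alpha> \<Longrightarrow> (y, x) \<in> thetaE E \<alpha>"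
  using th_equiv unfolding equiv_def sym_def by blast

lemma TCth:
  assumes ne: "\<alpha> \<noteq> []" and eq: "eqrels \<alpha>" and c: "c \<in> Mc E \<alpha>" and n: "n = length \<alpha>"
    and prem: "\<And>s. \<not> (\<forall>j<n - 1. s j) \<Longrightarrow> (c (s(n - 1 := False)), c (s(n - 1 := True))) \<in> thetaE E \<alpha>"
  shows "(c ((\<lambda>_. True)(n - 1 := False)), c (\<lambda>_. True)) \<in> thetaE E \<alpha>"
proof -
  have npos: "0 < n" using ne n by simp
  define d where "d = Lj (n - 1) c"
  have dM: "d \<in> Mc E \<alpha>" unfolding d_def using Lj_closed[OF eq c] .
  define e where "e = (\<lambda>s. if s (n - 1) \<and> \<not> (\<forall>j<n - 1. s j) then d s else c s)"
  have depc: "dep n c" using Mc_dep[OF c] n by simp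
  have depd: "dep n d" using Mc_dep[OF dM] n by simp
  have "dep n e" unfolding dep_def
  proof (intro allI impI)
    fix s s' :: "nat \<Rightarrow> bool" assume a: "\<forall>j<n. s j = s' j"
    have 1: "s (n - 1) = s' (n - 1)" using a npos by simp
    have 2: "(\<forall>j<n - 1. s j) = (\<forall>j<n - 1. s' j)" using a by auto
    have 3: "c s = c s'" using dep_eq[OF depc a] .
    have 4: "d s = d s'" using dep_eq[OF depd a] .
    show "e s = e s'" unfolding e_def using 1 2 3 4 by auto
  qed
  moreover have "(c s, e s) \<in> thetaE E \<alpha>" for s
  proof (cases "s (n - 1) \<and> \<not> (\<forall>j<n - 1. s j)")
    case True
    then have "s(n - 1 := True) = s" by (simp add: fun_upd_idem)
    then have "(d s, c s) \<in> thetaE E \<alpha>" using prem[of s] True by (simp add: d_def Lj_def)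
    then show ?thesis using True th_sym[OF ne eq] by (simp add: e_def)
  next
    case False
    then have "e s = c s" unfolding e_def by (subst if_not_P[OF False]) simp
    then show ?thesis using th_refl[OF ne eq] by simp
  qed
  ultimately have eM: "e \<in> Mc E \<alpha>" using perturb[OF ne eq c] n by simp
  have "(d (\<lambda>_. True), e (\<lambda>_. True)) \<in> thetaE E \<alpha>"
  proof (rule KM[OF ne eq eM dM])
    fix s assume ns: "\<not> (\<forall>j<length \<alpha>. s j)"
    show "e s = d s"
    proof (cases "s (n - 1)")
      case True
      have "\<not> (\<forall>j<n - 1. s j)"
      proof
        assume a: "\<forall>j<n - 1. s j"
        have "\<forall>j<n. s j"
        proof (intro allI impI)
          fix j assume "j < n"
          show "s j"
          proof (cases "j < n - 1")
            case True then show ?thesis using a by simp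
          next
            case False then have "j = n - 1" using \<open>j < n\<close> by simp
            then show ?thesis using \<open>s (n - 1)\<close> by simp
          qed
        qed
        then show False using ns n by simp
      qed
      then show ?thesis using True by (simp add: e_def)
    next
      case False
      then have "s(n - 1 := False) = s" by (simp add: fun_upd_idem)
      then show ?thesis using False by (simp add: e_def d_def Lj_def)
    qed
  qed
  moreover have "d (\<lambda>_. True) = c ((\<lambda>_. True)(n - 1 := False))" by (simp add: d_def Lj_def)
  moreover have "e (\<lambda>_. True) = c (\<lambda>_. True)" by (simp add: e_def)
  ultimately show ?thesis by simp
qed

lemma Mc_trivial_dir:
  assumes c: "c \<in> Mc E \<alpha>" and i: "i < length \<alpha>" and triv: "\<And>a b. (a, b) \<in> \<alpha> ! i \<Longrightarrow> a = b"
  shows "c s = c (s(i := x))"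
proof -
  obtain t ks where tks: "\<forall>k\<in>set ks. isco \<alpha> k" "c = (\<lambda>s. t (map (\<lambda>k. k s) ks))"
    using c unfolding Mc_def by blast
  have "map (\<lambda>k. k s) ks = map (\<lambda>k. k (s(i := x))) ks"
  proof (rule map_cong[OF refl])
    fix k assume "k \<in> set ks"
    then obtain j a b where "j < length \<alpha>" "(a, b) \<in> \<alpha> ! j" "k = coc j a b" using tks unfolding isco_def by blast
    then show "k s = k (s(i := x))" using triv by (cases "j = i") (auto simp: coc_def)
  qed
  then show ?thesis using tks(2) by (simp del: map_eq_conv)
qed

lemma I2M:
  assumes f: "(m, f) \<in> E" and las: "length as = length \<alpha>" and lbs: "length bs = length \<alpha>"
    and blk: "\<forall>i<length \<alpha>. length (as ! i) = length (bs ! i) \<and> list_all2 (\<lambda>x y. (x, y) \<in> \<alpha> ! i) (as ! i) (bs ! i)"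
    and lc: "length (concat as) = m"
  shows "(\<lambda>s. f (concat (map (\<lambda>i. if s i then bs ! i else as ! i) [0..<length \<alpha>]))) \<in> Mc E \<alpha>"
proof -
  let ?n = "length \<alpha>"
  define ks where "ks = concat (map (\<lambda>i. map (\<lambda>(a, b). coc i a b) (zip (as ! i) (bs ! i))) [0..<?n])"
  have ev: "map (\<lambda>k. k s) ks = concat (map (\<lambda>i. if s i then bs ! i else as ! i) [0..<?n])" for s
  proof -
    have "map (\<lambda>k. k s) ks = concat (map (\<lambda>i. map (\<lambda>k. k s) (map (\<lambda>(a, b). coc i a b) (zip (as ! i) (bs ! i)))) [0..<?n])"
      unfolding ks_def by (simp add: map_concat o_def)
    also have "\<dots> = concat (map (\<lambda>i. if s i then bs ! i else as ! i) [0..<?n])"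
    proof (rule arg_cong[where f=concat], rule map_cong[OF refl])
      fix i assume "i \<in> set [0..<?n]"
      then have "i < ?n" by simp
      then have "length (as ! i) = length (bs ! i)" using blk by blast
      then show "map (\<lambda>k. k s) (map (\<lambda>(a, b). coc i a b) (zip (as ! i) (bs ! i))) = (if s i then bs ! i else as ! i)"
        by (rule mapzip_coc)
    qed
    finally show ?thesis .
  qed
  have "length ks = length (map (\<lambda>k. k (\<lambda>_. False)) ks)" by simp
  also have "\<dots> = length (concat (map (\<lambda>i. as ! i) [0..<?n]))" unfolding ev by simp
  also have "map (\<lambda>i. as ! i) [0..<?n] = as" using las by (intro nth_equalityI) auto
  finally have lks: "length ks = m" using lc by simp
  show ?thesis unfolding Mc_def
  proof (intro CollectI exI conjI)
    show "(length ks, f) \<in> E" using f lks by simp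
    show "\<forall>k\<in>set ks. isco \<alpha> k"
    proof
      fix k assume "k \<in> set ks"
      then obtain i a b where i: "i < ?n" and ab: "(a, b) \<in> set (zip (as ! i) (bs ! i))" "k = coc i a b"
        unfolding ks_def by auto
      have "(a, b) \<in> \<alpha> ! i" using ab(1) blk i(1) unfolding list_all2_iff by blast
      then show "isco \<alpha> k" using ab i unfolding isco_def by blast
    qed
    show "(\<lambda>s. f (concat (map (\<lambda>i. if s i then bs ! i else as ! i) [0..<?n]))) = (\<lambda>s. f (map (\<lambda>k. k s) ks))"
      using ev by simp
  qed
qed

end

lemma split_last:
  assumes "0 < n"
  shows "concat (map (\<lambda>i. if (s(n - 1 := x)) i then bs ! i else as ! i) [0..<n]) =
    concat (map (\<lambda>i. if s i then bs ! i else as ! i) [0..<n - 1] @ [if x then bs ! (n - 1) else as ! (n - 1)])"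
proof -
  obtain k where k: "n = Suc k" using assms by (cases n) auto
  have u: "[0..<n] = [0..<k] @ [k]" using k by simp
  have m: "map (\<lambda>i. if (s(k := x)) i then bs ! i else as ! i) [0..<k] = map (\<lambda>i. if s i then bs ! i else as ! i) [0..<k]"
    by (rule map_cong) auto
  have fm: "map (\<lambda>i. if (s(k := x)) i then bs ! i else as ! i) [0..<n] =
     map (\<lambda>i. if s i then bs ! i else as ! i) [0..<k] @ [if x then bs ! k else as ! k]"
    unfolding u map_append m by simp
  have nk: "n - 1 = k" using k by simp
  show ?thesis unfolding nk by (subst fm) (rule refl)
qed

context mal begin

lemma M2I:
  assumes c: "c \<in> Mc E \<alpha>" and eq: "eqrels \<alpha>"
    and nt: "\<forall>i<length \<alpha>. \<exists>x. fst x \<noteq> snd x \<and> x \<in> \<alpha> ! i"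
  shows "\<exists>m f as bs. (m, f) \<in> E \<and> length as = length \<alpha> \<and> length bs = length \<alpha> \<and>
    (\<forall>i<length \<alpha>. length (as ! i) = length (bs ! i) \<and> as ! i \<noteq> bs ! i \<and>
        list_all2 (\<lambda>x y. (x, y) \<in> \<alpha> ! i) (as ! i) (bs ! i)) \<and>
    length (concat as) = m \<and> c = (\<lambda>s. f (concat (map (\<lambda>i. if s i then bs ! i else as ! i) [0..<length \<alpha>])))"
proof -
  let ?n = "length \<alpha>"
  obtain t ks where tks: "(length ks, t) \<in> E" "\<forall>k\<in>set ks. isco \<alpha> k" "c = (\<lambda>s. t (map (\<lambda>k. k s) ks))"
    using c unfolding Mc_def by blast
  define m where "m = length ks"
  have "\<forall>p<m. \<exists>x. fst x < ?n \<and> (fst (snd x), snd (snd x)) \<in> \<alpha> ! fst x \<and> ks ! p = coc (fst x) (fst (snd x)) (snd (snd x))"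
  proof (intro allI impI)
    fix p assume "p < m"
    then have "isco \<alpha> (ks ! p)" using tks m_def by simp
    then obtain i a b where "i < ?n" "(a, b) \<in> \<alpha> ! i" "ks ! p = coc i a b" unfolding isco_def by blast
    then show "\<exists>x. fst x < ?n \<and> (fst (snd x), snd (snd x)) \<in> \<alpha> ! fst x \<and> ks ! p = coc (fst x) (fst (snd x)) (snd (snd x))"
      by (intro exI[of _ "(i, a, b)"]) simp
  qed
  from list_choice[OF this] obtain tr where tr: "length tr = m"
    "\<forall>p<m. fst (tr ! p) < ?n \<and> (fst (snd (tr ! p)), snd (snd (tr ! p))) \<in> \<alpha> ! fst (tr ! p) \<and>
       ks ! p = coc (fst (tr ! p)) (fst (snd (tr ! p))) (snd (snd (tr ! p)))" by blast
  define dir where "dir p = fst (tr ! p)" for p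
  define A where "A p = fst (snd (tr ! p))" for p
  define B where "B p = snd (snd (tr ! p))" for p
  have trp: "\<And>p. p < m \<Longrightarrow> dir p < ?n \<and> (A p, B p) \<in> \<alpha> ! dir p \<and> ks ! p = coc (dir p) (A p) (B p)"
    using tr(2) unfolding dir_def A_def B_def by blast
  from list_choice[OF nt] obtain nl where nl: "length nl = ?n" "\<forall>i<?n. fst (nl ! i) \<noteq> snd (nl ! i) \<and> nl ! i \<in> \<alpha> ! i"
    by blast
  define a0 where "a0 i = fst (nl ! i)" for i
  define b0 where "b0 i = snd (nl ! i)" for i
  have nlp: "\<And>i. i < ?n \<Longrightarrow> a0 i \<noteq> b0 i \<and> (a0 i, b0 i) \<in> \<alpha> ! i"
    using nl(2) unfolding a0_def b0_def by simp
  define ab where "ab i = map A [0..<m] @ [a0 i]" for i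
  define bb where "bb i = map (\<lambda>p. if dir p = i then B p else A p) [0..<m] @ [b0 i]" for i
  define as where "as = map ab [0..<?n]"
  define bs where "bs = map bb [0..<?n]"
  have lab: "length (ab i) = Suc m" "length (bb i) = Suc m" for i by (simp_all add: ab_def bb_def)
  define \<pi> where "\<pi> p = dir p * Suc m + p" for p
  have pi_lt: "\<forall>p<m. \<pi> p < ?n * Suc m"
  proof (intro allI impI)
    fix p assume p: "p < m"
    have "\<pi> p < dir p * Suc m + Suc m" using p by (simp add: \<pi>_def)
    also have "\<dots> = Suc (dir p) * Suc m" by simp
    also have "\<dots> \<le> ?n * Suc m" using trp[OF p] by (intro mult_right_mono) auto
    finally show "\<pi> p < ?n * Suc m" .
  qed
  have tE: "(m, t) \<in> E" using tks m_def by simp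
  from minor[OF E tE pi_lt] obtain g where g: "(?n * Suc m, g) \<in> E"
    "\<forall>xs. length xs = ?n * Suc m \<longrightarrow> g xs = t (map (\<lambda>p. xs ! \<pi> p) [0..<m])" by blast
  show ?thesis
  proof (intro exI conjI)
    show "(?n * Suc m, g) \<in> E" by (rule g(1))
    show "length as = ?n" "length bs = ?n" by (simp_all add: as_def bs_def)
    show "\<forall>i<?n. length (as ! i) = length (bs ! i) \<and> as ! i \<noteq> bs ! i \<and>
        list_all2 (\<lambda>x y. (x, y) \<in> \<alpha> ! i) (as ! i) (bs ! i)"
    proof (intro allI impI conjI)
      fix i assume i: "i < ?n"
      show "length (as ! i) = length (bs ! i)" using i lab by (simp add: as_def bs_def)
      show "as ! i \<noteq> bs ! i"
      proof
        assume "as ! i = bs ! i"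
        then have "last (ab i) = last (bb i)" using i by (simp add: as_def bs_def)
        then show False using nlp[OF i] by (simp add: ab_def bb_def)
      qed
      show "list_all2 (\<lambda>x y. (x, y) \<in> \<alpha> ! i) (as ! i) (bs ! i)"
        unfolding list_all2_conv_all_nth
      proof (intro conjI allI impI)
        show "length (as ! i) = length (bs ! i)" using i lab by (simp add: as_def bs_def)
        fix p assume p: "p < length (as ! i)"
        show "(as ! i ! p, bs ! i ! p) \<in> \<alpha> ! i"
        proof (cases "p < m")
          case True
          have "(A p, A p) \<in> \<alpha> ! i" using eqrels_refl[OF eq i] .
          then show ?thesis using True i trp[OF True]
            by (auto simp: as_def bs_def ab_def bb_def nth_append)
        next
          case False
          then have "p = m" using p i lab by (simp add: as_def)
          then show ?thesis using i nlp[OF i] by (simp add: as_def bs_def ab_def bb_def nth_append)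
        qed
      qed
    qed
    show "length (concat as) = ?n * Suc m"
      unfolding as_def using length_concat_uniform[of ?n ab "Suc m"] lab by simp
    show "c = (\<lambda>s. g (concat (map (\<lambda>i. if s i then bs ! i else as ! i) [0..<?n])))"
    proof (rule ext)
      fix s
      define G where "G i = (if s i then bb i else ab i)" for i
      have mapG: "map (\<lambda>i. if s i then bs ! i else as ! i) [0..<?n] = map G [0..<?n]"
        by (rule map_cong) (auto simp: as_def bs_def G_def)
      have lG: "\<forall>i<?n. length (G i) = Suc m" using lab by (simp add: G_def)
      have lc: "length (concat (map G [0..<?n])) = ?n * Suc m" using length_concat_uniform[OF lG] .
      have "map (\<lambda>p. concat (map G [0..<?n]) ! \<pi> p) [0..<m] = map (\<lambda>k. k s) ks"
      proof (rule nth_equalityI)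
        show "length (map (\<lambda>p. concat (map G [0..<?n]) ! \<pi> p) [0..<m]) = length (map (\<lambda>k. k s) ks)"
          by (simp add: m_def)
        fix p assume "p < length (map (\<lambda>p. concat (map G [0..<?n]) ! \<pi> p) [0..<m])"
        then have p: "p < m" by simp
        have "concat (map G [0..<?n]) ! \<pi> p = G (dir p) ! p"
          unfolding \<pi>_def using concat_nth_uniform[OF lG] trp[OF p] p by simp
        also have "\<dots> = (if s (dir p) then B p else A p)" using p by (simp add: G_def ab_def bb_def nth_append)
        also have "\<dots> = (ks ! p) s" using trp[OF p] by (simp add: coc_def)
        finally show "map (\<lambda>p. concat (map G [0..<?n]) ! \<pi> p) [0..<m] ! p = map (\<lambda>k. k s) ks ! p"
          using p m_def by simp
      qed
      then show "c s = g (concat (map (\<lambda>i. if s i then bs ! i else as ! i) [0..<?n]))"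
        unfolding mapG using g(2) lc tks(3) by simp
    qed
  qed
qed

lemma theta_comm:
  assumes ne: "\<alpha> \<noteq> []" and sub: "set \<alpha> \<subseteq> Con E"
  shows "commutator E \<alpha> = thetaE E \<alpha>"
proof -
  let ?n = "length \<alpha>"
  have eq: "eqrels \<alpha>" unfolding eqrels_def
  proof (intro allI impI)
    fix i assume "i < length \<alpha>"
    then have "\<alpha> ! i \<in> Con E" using sub nth_mem by blast
    then show "equiv UNIV (\<alpha> ! i)" by (simp add: Con_iff)
  qed
  have npos: "0 < ?n" using ne by simp
  have ClE: "Clo E = E" using clone_Clo[OF E] .
  have cent: "centralizes E \<alpha> (thetaE E \<alpha>)"
    unfolding centralizes_def Let_def
  proof (intro allI impI)
    fix m f as bs
    assume f: "(m, f) \<in> Clo E" and las: "length as = ?n" and lbs: "length bs = ?n"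
      and blk: "\<forall>i<?n. length (as ! i) = length (bs ! i) \<and> as ! i \<noteq> bs ! i \<and> list_all2 (\<lambda>x y. (x, y) \<in> \<alpha> ! i) (as ! i) (bs ! i)"
      and lc: "length (concat as) = m"
      and P: "\<forall>s. (\<exists>i<?n - 1. \<not> s i) \<longrightarrow>
           (f (concat (map (\<lambda>i. if s i then bs ! i else as ! i) [0..<?n - 1] @ [as ! (?n - 1)])),
            f (concat (map (\<lambda>i. if s i then bs ! i else as ! i) [0..<?n - 1] @ [bs ! (?n - 1)]))) \<in> thetaE E \<alpha>"
    define c where "c = (\<lambda>s. f (concat (map (\<lambda>i. if s i then bs ! i else as ! i) [0..<?n])))"
    have cM: "c \<in> Mc E \<alpha>" unfolding c_def
      using I2M[of m f as \<alpha> bs] f ClE las lbs blk lc by simp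
    have cx: "c (s(?n - 1 := x)) = f (concat (map (\<lambda>i. if s i then bs ! i else as ! i) [0..<?n - 1] @
        [if x then bs ! (?n - 1) else as ! (?n - 1)]))" for s x
      unfolding c_def using split_last[OF npos, of s x bs as] by simp
    have "(c ((\<lambda>_. True)(?n - 1 := False)), c (\<lambda>_. True)) \<in> thetaE E \<alpha>"
    proof (rule TCth[OF ne eq cM refl])
      fix s assume "\<not> (\<forall>j<?n - 1. s j)"
      then have "\<exists>i<?n - 1. \<not> s i" by blast
      then show "(c (s(?n - 1 := False)), c (s(?n - 1 := True))) \<in> thetaE E \<alpha>"
        using P cx by simp
    qed
    moreover have "(\<lambda>_. True)(?n - 1 := True) = (\<lambda>_. True)" by (rule ext) simp
    then have "c (\<lambda>_. True) = c ((\<lambda>_. True)(?n - 1 := True))" by simp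
    ultimately show "(f (concat (map (\<lambda>i. bs ! i) [0..<?n - 1] @ [as ! (?n - 1)])),
         f (concat (map (\<lambda>i. bs ! i) [0..<?n - 1] @ [bs ! (?n - 1)]))) \<in> thetaE E \<alpha>"
      using cx[of "\<lambda>_. True"] by simp
  qed
  have thC: "thetaE E \<alpha> \<in> Con E" using theta_Con[OF ne eq] .
  have 1: "commutator E \<alpha> \<subseteq> thetaE E \<alpha>"
    unfolding commutator_def using thC cent by blast
  have 2: "thetaE E \<alpha> \<subseteq> commutator E \<alpha>"
  proof
    fix uv assume uv: "uv \<in> thetaE E \<alpha>"
    obtain u v where uvd: "uv = (u, v)" by force
    have K: "Kc ?n u v \<in> Mc E \<alpha>" using uv uvd by (simp add: thetaE_def)
    show "uv \<in> commutator E \<alpha>" unfolding commutator_def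
    proof (rule InterI)
      fix \<gamma> assume "\<gamma> \<in> {\<gamma> \<in> Con E. centralizes E \<alpha> \<gamma>}"
      then have gC: "\<gamma> \<in> Con E" and gc: "centralizes E \<alpha> \<gamma>" by auto
      have grefl: "(x, x) \<in> \<gamma>" for x using gC by (auto simp: Con_iff equiv_def refl_on_def)
      show "uv \<in> \<gamma>"
      proof (cases "u = v")
        case True then show ?thesis using uvd grefl by simp
      next
        case False
        have nt: "\<forall>i<?n. \<exists>x. fst x \<noteq> snd x \<and> x \<in> \<alpha> ! i"
        proof (rule ccontr)
          assume "\<not> (\<forall>i<?n. \<exists>x. fst x \<noteq> snd x \<and> x \<in> \<alpha> ! i)"
          then obtain i where i: "i < ?n" and tr: "\<And>a b. (a, b) \<in> \<alpha> ! i \<Longrightarrow> a = b" by force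
          have "Kc ?n u v (\<lambda>_. True) = Kc ?n u v ((\<lambda>_. True)(i := False))"
            by (rule Mc_trivial_dir[OF K i tr])
          moreover have "Kc ?n u v ((\<lambda>_. True)(i := False)) = u"
            using i unfolding Kc_def by (subst if_not_P) auto
          ultimately show False using False by (simp add: Kc_def)
        qed
        from M2I[OF K eq nt] obtain m f as bs where inst: "(m, f) \<in> E" "length as = ?n" "length bs = ?n"
          "\<forall>i<?n. length (as ! i) = length (bs ! i) \<and> as ! i \<noteq> bs ! i \<and> list_all2 (\<lambda>x y. (x, y) \<in> \<alpha> ! i) (as ! i) (bs ! i)"
          "length (concat as) = m" and Keq: "Kc ?n u v = (\<lambda>s. f (concat (map (\<lambda>i. if s i then bs ! i else as ! i) [0..<?n])))"
          by blast
        have Kx: "Kc ?n u v (s(?n - 1 := x)) = f (concat (map (\<lambda>i. if s i then bs ! i else as ! i) [0..<?n - 1] @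
          [if x then bs ! (?n - 1) else as ! (?n - 1)]))" for s x
          unfolding Keq using split_last[OF npos, of s x bs as] by simp
        have Knt: "Kc ?n u v (s(?n - 1 := x)) = u" if "\<exists>i<?n - 1. \<not> s i" for s x
        proof -
          from that obtain i where "i < ?n - 1" "\<not> s i" by blast
          then have "\<not> (\<forall>j<?n. (s(?n - 1 := x)) j)" by (metis diff_le_self fun_upd_other less_le_trans nat_neq_iff)
          then show ?thesis unfolding Kc_def by (subst if_not_P) auto
        qed
        have prem: "\<forall>s. (\<exists>i<?n - 1. \<not> s i) \<longrightarrow>
           (f (concat (map (\<lambda>i. if s i then bs ! i else as ! i) [0..<?n - 1] @ [as ! (?n - 1)])),
            f (concat (map (\<lambda>i. if s i then bs ! i else as ! i) [0..<?n - 1] @ [bs ! (?n - 1)]))) \<in> \<gamma>"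
        proof (intro allI impI)
          fix s assume h: "\<exists>i<?n - 1. \<not> s i"
          have "f (concat (map (\<lambda>i. if s i then bs ! i else as ! i) [0..<?n - 1] @ [as ! (?n - 1)])) = u"
            using Kx[of s False] Knt[OF h, of False] by simp
          moreover have "f (concat (map (\<lambda>i. if s i then bs ! i else as ! i) [0..<?n - 1] @ [bs ! (?n - 1)])) = u"
            using Kx[of s True] Knt[OF h, of True] by simp
          ultimately show "(f (concat (map (\<lambda>i. if s i then bs ! i else as ! i) [0..<?n - 1] @ [as ! (?n - 1)])),
            f (concat (map (\<lambda>i. if s i then bs ! i else as ! i) [0..<?n - 1] @ [bs ! (?n - 1)]))) \<in> \<gamma>"
            using grefl by simp
        qed
        have fC: "(m, f) \<in> Clo E" using inst(1) ClE by simp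
        have concl: "(f (concat (map (\<lambda>i. bs ! i) [0..<?n - 1] @ [as ! (?n - 1)])),
           f (concat (map (\<lambda>i. bs ! i) [0..<?n - 1] @ [bs ! (?n - 1)]))) \<in> \<gamma>"
          using gc fC inst(2-5) prem unfolding centralizes_def Let_def by blast
        have a: "f (concat (map (\<lambda>i. bs ! i) [0..<?n - 1] @ [as ! (?n - 1)])) = u"
        proof -
          have "Kc ?n u v ((\<lambda>_. True)(?n - 1 := False)) = u"
            using npos unfolding Kc_def by (subst if_not_P) auto
          then show ?thesis using Kx[of "\<lambda>_. True" False] by simp
        qed
        have b: "f (concat (map (\<lambda>i. bs ! i) [0..<?n - 1] @ [bs ! (?n - 1)])) = v"
        proof -
          have "(\<lambda>_. True)(?n - 1 := True) = (\<lambda>_. True)" by (rule ext) simp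
          then have "Kc ?n u v ((\<lambda>_. True)(?n - 1 := True)) = v" by (simp add: Kc_def)
          then show ?thesis using Kx[of "\<lambda>_. True" True] by simp
        qed
        show ?thesis using concl a b uvd by simp
      qed
    qed
  qed
  show ?thesis using 1 2 by blast
qed

end

fun Phi :: "('a list \<Rightarrow> 'a) \<Rightarrow> nat \<Rightarrow> 'a cube \<Rightarrow> 'a cube" where
  "Phi qf 0 d = d"
| "Phi qf (Suc 0) d = Lj 0 d"
| "Phi qf (Suc (Suc k)) d = (\<lambda>s. qf [Lj (Suc k) d s, Phi qf (Suc k) (Lj (Suc k) d) s, Phi qf (Suc k) d s])"

lemma Phi_fiber:
  "(\<forall>s'. (\<forall>j\<ge>Suc k. s' j = s j) \<longrightarrow> d s' = d' s') \<Longrightarrow> Phi qf (Suc k) d s = Phi qf (Suc k) d' s"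
proof (induction k arbitrary: d d' s)
  case 0
  have "\<forall>j\<ge>Suc 0. (s(0 := False)) j = s j" by simp
  then have "d (s(0 := False)) = d' (s(0 := False))" using 0 by blast
  then show ?case unfolding Phi.simps Lj_def .
next
  case (Suc k)
  have 1: "Lj (Suc k) d s = Lj (Suc k) d' s"
  proof -
    have "\<forall>j\<ge>Suc (Suc k). (s(Suc k := False)) j = s j" by simp
    then have "d (s(Suc k := False)) = d' (s(Suc k := False))" using Suc.prems by blast
    then show ?thesis unfolding Lj_def .
  qed
  have 2: "Phi qf (Suc k) (Lj (Suc k) d) s = Phi qf (Suc k) (Lj (Suc k) d') s"
  proof (rule Suc.IH, intro allI impI)
    fix s' :: "nat \<Rightarrow> bool" assume a: "\<forall>j\<ge>Suc k. s' j = s j"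
    have "\<forall>j\<ge>Suc (Suc k). (s'(Suc k := False)) j = s j" using a by simp
    then have "d (s'(Suc k := False)) = d' (s'(Suc k := False))" using Suc.prems by blast
    then show "Lj (Suc k) d s' = Lj (Suc k) d' s'" unfolding Lj_def .
  qed
  have 3: "Phi qf (Suc k) d s = Phi qf (Suc k) d' s"
  proof (rule Suc.IH, intro allI impI)
    fix s' :: "nat \<Rightarrow> bool" assume a: "\<forall>j\<ge>Suc k. s' j = s j"
    then have "\<forall>j\<ge>Suc (Suc k). s' j = s j" by simp
    then show "d s' = d' s'" using Suc.prems by blast
  qed
  show ?case using 1 2 3 by simp
qed

lemma Phi_closed:
  assumes Lc: "\<And>c j. c \<in> R \<Longrightarrow> Lj j c \<in> R"
    and qc: "\<And>c1 c2 c3. c1 \<in> R \<Longrightarrow> c2 \<in> R \<Longrightarrow> c3 \<in> R \<Longrightarrow> (\<lambda>s. qf [c1 s, c2 s, c3 s]) \<in> R"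
  shows "(\<forall>j<Suc k. Lj j d \<in> R) \<Longrightarrow> Phi qf (Suc k) d \<in> R"
proof (induction k arbitrary: d)
  case 0 then show ?case by simp
next
  case (Suc k)
  have a: "Lj (Suc k) d \<in> R" using Suc.prems by simp
  have b: "Phi qf (Suc k) (Lj (Suc k) d) \<in> R" using Suc.IH Lc[OF a] by blast
  have c: "Phi qf (Suc k) d \<in> R" using Suc.IH Suc.prems by simp
  show ?case using qc[OF a b c] by simp
qed

context mal begin

lemma Phi_agree: "(\<exists>j<Suc k. \<not> s j) \<Longrightarrow> Phi qf (Suc k) d s = d s"
proof (induction k arbitrary: d s)
  case 0
  then have "s(0 := False) = s" by (auto simp: fun_upd_idem)
  then show ?case by (simp add: Lj_def)
next
  case (Suc k)
  show ?case
  proof (cases "s (Suc k)")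
    case False
    have "Phi qf (Suc k) (Lj (Suc k) d) s = Phi qf (Suc k) d s"
    proof (rule Phi_fiber, intro allI impI)
      fix s' :: "nat \<Rightarrow> bool" assume a: "\<forall>j\<ge>Suc k. s' j = s j"
      then have "\<not> s' (Suc k)" using False by simp
      then have "s'(Suc k := False) = s'" by (simp add: fun_upd_idem)
      then show "Lj (Suc k) d s' = d s'" by (simp add: Lj_def)
    qed
    moreover have "Lj (Suc k) d s = d s" using False by (simp add: Lj_def fun_upd_idem)
    ultimately show ?thesis by (simp add: q2)
  next
    case True
    then have ex: "\<exists>j<Suc k. \<not> s j" using Suc.prems by (metis less_Suc_eq)
    have "Phi qf (Suc k) (Lj (Suc k) d) s = Lj (Suc k) d s" using Suc.IH[OF ex] .
    moreover have "Phi qf (Suc k) d s = d s" using Suc.IH[OF ex] .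
    ultimately show ?thesis by (simp add: q1)
  qed
qed

end

definition insj :: "nat \<Rightarrow> (nat \<Rightarrow> bool) \<Rightarrow> (nat \<Rightarrow> bool)" where
  "insj j s = (\<lambda>k. if k < j then s k else if k = j then False else s (k - 1))"

definition delj :: "nat \<Rightarrow> (nat \<Rightarrow> bool) \<Rightarrow> (nat \<Rightarrow> bool)" where
  "delj j s = (\<lambda>k. if k < j then s k else s (Suc k))"

definition dela :: "nat \<Rightarrow> 'x list \<Rightarrow> 'x list" where
  "dela j xs = take j xs @ drop (Suc j) xs"

lemma dela_length: "j < length xs \<Longrightarrow> length (dela j xs) = length xs - 1"
  by (simp add: dela_def)

lemma dela_nth: "j < length xs \<Longrightarrow> i < length xs - 1 \<Longrightarrow> dela j xs ! i = (if i < j then xs ! i else xs ! Suc i)"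
  by (auto simp: dela_def nth_append min_def)

lemma dela_set: "set (dela j xs) \<subseteq> set xs"
  unfolding dela_def set_append by (rule Un_least[OF set_take_subset set_drop_subset])

lemma ins_del: "insj j (delj j s) = s(j := False)"
  by (rule ext) (auto simp: insj_def delj_def)

lemma eqrels_dela: assumes eq: "eqrels \<alpha>" and j: "j < length \<alpha>" shows "eqrels (dela j \<alpha>)"
  unfolding eqrels_def
proof (intro allI impI)
  fix i assume "i < length (dela j \<alpha>)"
  then have i: "i < length \<alpha> - 1" using dela_length[OF j] by simp
  show "equiv UNIV (dela j \<alpha> ! i)"
  proof (cases "i < j")
    case True
    then show ?thesis using dela_nth[OF j i] eq i unfolding eqrels_def by simp
  next
    case False
    have "Suc i < length \<alpha>" using i by simp
    then show ?thesis using dela_nth[OF j i] eq False unfolding eqrels_def by simp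
  qed
qed

lemma face_closed:
  assumes c: "c \<in> Mc E \<alpha>" and j: "j < length \<alpha>" and n2: "2 \<le> length \<alpha>" and eq: "eqrels \<alpha>"
  shows "(\<lambda>s. c (insj j s)) \<in> Mc E (dela j \<alpha>)"
proof (rule Mc_reindex[OF c])
  fix k assume "isco \<alpha> k"
  then obtain i a b where k: "i < length \<alpha>" "(a, b) \<in> \<alpha> ! i" "k = coc i a b" unfolding isco_def by blast
  have ld: "length (dela j \<alpha>) = length \<alpha> - 1" using dela_length[OF j] .
  show "isco (dela j \<alpha>) (\<lambda>s. k (insj j s))"
  proof (cases "i < j")
    case True
    have "(\<lambda>s. k (insj j s)) = coc i a b" using k True by (auto simp: coc_def insj_def)
    moreover have "i < length (dela j \<alpha>)" using True j ld by simp
    moreover have "dela j \<alpha> ! i = \<alpha> ! i" using dela_nth[OF j] True j by simp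
    ultimately show ?thesis using k unfolding isco_def by metis
  next
    case False
    show ?thesis
    proof (cases "i = j")
      case True
      have "(\<lambda>s. k (insj j s)) = coc 0 a a" using k True by (auto simp: coc_def insj_def)
      moreover have "0 < length (dela j \<alpha>)" using ld n2 by simp
      moreover have "(a, a) \<in> dela j \<alpha> ! 0" using eqrels_refl[OF eqrels_dela[OF eq j]] ld n2 by simp
      ultimately show ?thesis unfolding isco_def by metis
    next
      case False2: False
      then have ij: "j < i" using False by simp
      have "(\<lambda>s. k (insj j s)) = coc (i - 1) a b" using k ij by (auto simp: coc_def insj_def)
      moreover have "i - 1 < length (dela j \<alpha>)" using ij k ld by simp
      moreover have "dela j \<alpha> ! (i - 1) = \<alpha> ! i"
      proof -
        have a: "i - 1 < length \<alpha> - 1" using ij k by simp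
        have b: "\<not> (i - 1 < j)" using ij by simp
        have c: "Suc (i - 1) = i" using ij by simp
        show ?thesis using dela_nth[OF j a] b c by simp
      qed
      ultimately show ?thesis using k unfolding isco_def by metis
    qed
  qed
qed

lemma cyl_closed:
  assumes d: "d \<in> Mc E (dela j \<alpha>)" and j: "j < length \<alpha>"
  shows "(\<lambda>s. d (delj j s)) \<in> Mc E \<alpha>"
proof (rule Mc_reindex[OF d])
  fix k assume "isco (dela j \<alpha>) k"
  then obtain i a b where k: "i < length (dela j \<alpha>)" "(a, b) \<in> dela j \<alpha> ! i" "k = coc i a b" unfolding isco_def by blast
  have ld: "length (dela j \<alpha>) = length \<alpha> - 1" using dela_length[OF j] .
  show "isco \<alpha> (\<lambda>s. k (delj j s))"
  proof (cases "i < j")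
    case True
    have "(\<lambda>s. k (delj j s)) = coc i a b" using k True by (auto simp: coc_def delj_def)
    moreover have "dela j \<alpha> ! i = \<alpha> ! i" using dela_nth[OF j] True k ld by simp
    ultimately show ?thesis using k ld unfolding isco_def by (metis less_imp_diff_less less_trans j True)
  next
    case False
    have "(\<lambda>s. k (delj j s)) = coc (Suc i) a b" using k False by (auto simp: coc_def delj_def)
    moreover have "dela j \<alpha> ! i = \<alpha> ! Suc i" using dela_nth[OF j] False k ld by simp
    moreover have "Suc i < length \<alpha>" using k ld by simp
    ultimately show ?thesis using k unfolding isco_def by metis
  qed
qed

lemma EQ:
  assumes m1: "mal E1 qf" and m2: "mal E2 qf"
    and T1: "\<Theta> \<subseteq> Con E1" and T2: "\<Theta> \<subseteq> Con E2"
    and cm: "\<And>\<beta>. \<beta> \<noteq> [] \<Longrightarrow> set \<beta> \<subseteq> \<Theta> \<Longrightarrow> commutator E1 \<beta> = commutator E2 \<beta>"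
  shows "\<alpha> \<noteq> [] \<Longrightarrow> set \<alpha> \<subseteq> \<Theta> \<Longrightarrow> Mc E1 \<alpha> \<subseteq> Mc E2 \<alpha>"
proof (induction "length \<alpha>" arbitrary: \<alpha> rule: less_induct)
  case less
  note ne = less.prems(1) and sub = less.prems(2)
  let ?n = "length \<alpha>"
  have eq: "eqrels \<alpha>" unfolding eqrels_def
  proof (intro allI impI)
    fix i assume "i < length \<alpha>"
    then have "\<alpha> ! i \<in> set \<alpha>" by (rule nth_mem)
    then have "\<alpha> ! i \<in> Con E1" using sub T1 by (meson subsetD)
    then show "equiv UNIV (\<alpha> ! i)" by (simp add: Con_iff)
  qed
  show ?case
  proof
    fix c assume c: "c \<in> Mc E1 \<alpha>"
    have L2: "Lj j c \<in> Mc E2 \<alpha>" if j: "j < ?n" for j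
    proof (cases "?n = 1")
      case True
      then have j0: "j = 0" using j by simp
      have "Lj j c = (\<lambda>s. c (\<lambda>_. False))"
      proof (rule ext)
        fix s
        show "Lj j c s = c (\<lambda>_. False)" unfolding Lj_def
          by (rule mal.dep_eq[OF m1 Mc_dep[OF c]]) (use True j0 in simp)
      qed
      then show ?thesis using mal.const_closed[OF m2 ne eq] by simp
    next
      case False
      then have n2: "2 \<le> ?n" using ne by (cases ?n) auto
      have f1: "(\<lambda>s. c (insj j s)) \<in> Mc E1 (dela j \<alpha>)" using face_closed[OF c j n2 eq] .
      have lt: "length (dela j \<alpha>) < ?n" using dela_length[OF j] ne by simp
      have dne: "dela j \<alpha> \<noteq> []"
      proof
        assume "dela j \<alpha> = []"
        then have "length (dela j \<alpha>) = 0" by simp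
        then show False using dela_length[OF j] n2 by simp
      qed
      have dsub: "set (dela j \<alpha>) \<subseteq> \<Theta>" by (rule subset_trans[OF dela_set sub])
      have "(\<lambda>s. c (insj j s)) \<in> Mc E2 (dela j \<alpha>)" by (rule subsetD[OF less.hyps[OF lt dne dsub] f1])
      from cyl_closed[OF this j] have "(\<lambda>s. c (insj j (delj j s))) \<in> Mc E2 \<alpha>" by simp
      then show ?thesis unfolding ins_del Lj_def .
    qed
    have L1: "Lj j c \<in> Mc E1 \<alpha>" for j using mal.Lj_closed[OF m1 eq c] .
    obtain k where nk: "?n = Suc k" using ne by (cases ?n) auto
    have P2: "Phi qf ?n c \<in> Mc E2 \<alpha>" unfolding nk
      by (rule Phi_closed[where R = "Mc E2 \<alpha>"])
        (use mal.Lj_closed[OF m2 eq] mal.q_closed[OF m2] L2 nk in auto)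
    have P1: "Phi qf ?n c \<in> Mc E1 \<alpha>" unfolding nk
      by (rule Phi_closed[where R = "Mc E1 \<alpha>"])
        (use mal.Lj_closed[OF m1 eq] mal.q_closed[OF m1] L1 in auto)
    have agree: "c s = Phi qf ?n c s" if "\<not> (\<forall>j<?n. s j)" for s
    proof -
      have "\<exists>j<Suc k. \<not> s j" using that nk by auto
      then show ?thesis using mal.Phi_agree[OF m1] nk by simp
    qed
    have "(Phi qf ?n c (\<lambda>_. True), c (\<lambda>_. True)) \<in> thetaE E1 \<alpha>"
      using mal.KM[OF m1 ne eq c P1] agree by blast
    moreover have s1: "set \<alpha> \<subseteq> Con E1" using sub T1 by blast
    moreover have s2: "set \<alpha> \<subseteq> Con E2" using sub T2 by blast
    ultimately have th2: "(Phi qf ?n c (\<lambda>_. True), c (\<lambda>_. True)) \<in> thetaE E2 \<alpha>"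
      using mal.theta_comm[OF m1 ne s1] mal.theta_comm[OF m2 ne s2] cm[OF ne sub] by simp
    have "(\<lambda>s. if (\<forall>j<?n. s j = True) then c (\<lambda>_. True) else Phi qf ?n c s) \<in> Mc E2 \<alpha>"
      using mal.CM[OF m2 ne eq P2 th2] .
    moreover have "(\<lambda>s. if (\<forall>j<?n. s j = True) then c (\<lambda>_. True) else Phi qf ?n c s) = c"
    proof (rule ext)
      fix s
      show "(if (\<forall>j<?n. s j = True) then c (\<lambda>_. True) else Phi qf ?n c s) = c s"
      proof (cases "\<forall>j<?n. s j")
        case True
        have "c s = c (\<lambda>_. True)" by (rule mal.dep_eq[OF m1 Mc_dep[OF c]]) (use True in simp)
        then show ?thesis using True by simp
      next
        case False
        then have "\<not> (\<forall>j<?n. s j = True)" by simp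
        then show ?thesis using agree[OF False] by (subst if_not_P) simp_all
      qed
    qed
    ultimately show "c \<in> Mc E2 \<alpha>" by simp
  qed
qed

definition closedM :: "'a operation \<Rightarrow> 'a cube set \<Rightarrow> bool" where
  "closedM x R \<longleftrightarrow> (\<forall>cs. length cs = fst x \<longrightarrow> set cs \<subseteq> R \<longrightarrow> (\<lambda>s. snd x (map (\<lambda>c. c s) cs)) \<in> R)"

definition bigC :: "'a operation set \<Rightarrow> 'a operation set" where
  "bigC F = {x. 0 < fst x \<and> (\<forall>xs. length xs \<noteq> fst x \<longrightarrow> snd x xs = undefined) \<and>
     (\<forall>\<theta>\<in>Con F. pres x \<theta>) \<and> (\<forall>\<alpha>. \<alpha> \<noteq> [] \<longrightarrow> set \<alpha> \<subseteq> Con F \<longrightarrow> closedM x (Mc (Clo F) \<alpha>))}"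

lemma Mc_mono: "E \<subseteq> E' \<Longrightarrow> Mc E \<alpha> \<subseteq> Mc E' \<alpha>"
  unfolding Mc_def by blast

lemma comm_Clo: "commutator (Clo F) \<alpha> = commutator F \<alpha>"
  unfolding commutator_def centralizes_def Clo_Clo Con_Clo ..

lemma bigC_clone: fixes F :: "'a operation set" shows "is_clone (bigC F)"
  unfolding is_clone_def
proof (intro conjI)
  show "\<forall>(n, f)\<in>bigC F. 0 < n \<and> (\<forall>xs. length xs \<noteq> n \<longrightarrow> f xs = undefined)"
    unfolding ball_pair_iff bigC_def by simp
  show "\<forall>m i. i < m \<longrightarrow> proj_op m i \<in> bigC F"
  proof (intro allI impI)
    fix m i :: nat assume i: "i < m"
    have p: "pres (proj_op m i) \<theta>" for \<theta> :: "'a rel"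
      unfolding pres_def proj_op_def using i by (auto simp: list_all2_conv_all_nth)
    have c: "closedM (proj_op m i) R" for R :: "'a cube set"
      unfolding closedM_def proj_op_def
    proof (intro allI impI)
      fix cs :: "'a cube list" assume l: "length cs = fst (m, \<lambda>xs. if length xs = m then xs ! i else undefined)"
        and s: "set cs \<subseteq> R"
      have "(\<lambda>s. snd (m, \<lambda>xs. if length xs = m then xs ! i else undefined) (map (\<lambda>c. c s) cs)) = cs ! i"
        using l i by (auto simp: fun_eq_iff)
      moreover have "cs ! i \<in> R" using s l i by (simp add: subset_iff)
      ultimately show "(\<lambda>s. snd (m, \<lambda>xs. if length xs = m then xs ! i else undefined) (map (\<lambda>c. c s) cs)) \<in> R"
        by simp
    qed
    show "proj_op m i \<in> bigC F" unfolding bigC_def using p c i by (simp add: proj_op_def)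
  qed
  show "\<forall>n f m gs. (n, f) \<in> bigC F \<longrightarrow> length gs = n \<longrightarrow> (\<forall>g\<in>set gs. (m, g) \<in> bigC F)
     \<longrightarrow> comp_op f m gs \<in> bigC F"
  proof (intro allI impI)
    fix n f m gs assume nf: "(n, f) \<in> bigC F" and lg: "length gs = n" and gs: "\<forall>g\<in>set gs. (m, g) \<in> bigC F"
    have npos: "0 < n" using nf by (simp add: bigC_def)
    then have "gs ! 0 \<in> set gs" using lg by simp
    then have "(m, gs ! 0) \<in> bigC F" using gs by blast
    then have mpos: "0 < m" by (simp add: bigC_def)
    have pr: "pres (comp_op f m gs) \<theta>" if th: "\<theta> \<in> Con F" for \<theta>
      unfolding pres_def
    proof (intro allI impI)
      fix xs ys assume l: "length xs = fst (comp_op f m gs)" "length ys = fst (comp_op f m gs)"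
        and r: "list_all2 (\<lambda>x y. (x, y) \<in> \<theta>) xs ys"
      have lm: "length xs = m" "length ys = m" using l by (auto simp: comp_op_def)
      have "\<forall>g\<in>set gs. (g xs, g ys) \<in> \<theta>"
      proof
        fix g assume "g \<in> set gs"
        then have "pres (m, g) \<theta>" using gs th by (simp add: bigC_def)
        then show "(g xs, g ys) \<in> \<theta>" using lm r by (simp add: pres_def)
      qed
      then have "list_all2 (\<lambda>x y. (x, y) \<in> \<theta>) (map (\<lambda>g. g xs) gs) (map (\<lambda>g. g ys) gs)"
        by (simp add: list_all2_conv_all_nth)
      moreover have "pres (n, f) \<theta>" using nf th by (simp add: bigC_def)
      ultimately have "(f (map (\<lambda>g. g xs) gs), f (map (\<lambda>g. g ys) gs)) \<in> \<theta>"
        using lg by (simp add: pres_def)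
      then show "(snd (comp_op f m gs) xs, snd (comp_op f m gs) ys) \<in> \<theta>"
        using lm by (simp add: comp_op_def)
    qed
    have cl: "closedM (comp_op f m gs) (Mc (Clo F) \<alpha>)" if a: "\<alpha> \<noteq> []" "set \<alpha> \<subseteq> Con F" for \<alpha>
      unfolding closedM_def
    proof (intro allI impI)
      fix cs :: "'a cube list" assume l: "length cs = fst (comp_op f m gs)" and s: "set cs \<subseteq> Mc (Clo F) \<alpha>"
      have lm: "length cs = m" using l by (simp add: comp_op_def)
      let ?ds = "map (\<lambda>g. \<lambda>s. g (map (\<lambda>c. c s) cs)) gs"
      have setds: "set ?ds \<subseteq> Mc (Clo F) \<alpha>"
      proof
        fix d assume "d \<in> set ?ds"
        then obtain g where g: "g \<in> set gs" "d = (\<lambda>s. g (map (\<lambda>c. c s) cs))" by auto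
        have "closedM (m, g) (Mc (Clo F) \<alpha>)" using gs g(1) a by (simp add: bigC_def)
        then show "d \<in> Mc (Clo F) \<alpha>" using g(2) lm s by (simp add: closedM_def)
      qed
      have "closedM (n, f) (Mc (Clo F) \<alpha>)" using nf a by (simp add: bigC_def)
      then have "\<forall>cs. length cs = n \<longrightarrow> set cs \<subseteq> Mc (Clo F) \<alpha> \<longrightarrow> (\<lambda>s. f (map (\<lambda>c. c s) cs)) \<in> Mc (Clo F) \<alpha>"
        unfolding closedM_def by simp
      then have "length ?ds = n \<longrightarrow> set ?ds \<subseteq> Mc (Clo F) \<alpha> \<longrightarrow> (\<lambda>s. f (map (\<lambda>d. d s) ?ds)) \<in> Mc (Clo F) \<alpha>"
        by (rule spec)
      then have "(\<lambda>s. f (map (\<lambda>d. d s) ?ds)) \<in> Mc (Clo F) \<alpha>" using setds lg by simp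
      moreover have "(\<lambda>s. f (map (\<lambda>d. d s) ?ds)) = (\<lambda>s. snd (comp_op f m gs) (map (\<lambda>c. c s) cs))"
        using lm by (simp add: comp_op_def o_def)
      ultimately show "(\<lambda>s. snd (comp_op f m gs) (map (\<lambda>c. c s) cs)) \<in> Mc (Clo F) \<alpha>" by simp
    qed
    show "comp_op f m gs \<in> bigC F" unfolding bigC_def
      using mpos pr cl by (simp add: comp_op_def)
  qed
qed

lemma Clo_sub_bigC: "Clo F \<subseteq> bigC F"
proof
  fix x assume x: "x \<in> Clo F"
  have n: "0 < fst x \<and> (\<forall>xs. length xs \<noteq> fst x \<longrightarrow> snd x xs = undefined)" using Clo_norm0[OF x] .
  have p: "\<forall>\<theta>\<in>Con F. pres x \<theta>" using Clo_pres x by blast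
  have c: "closedM x (Mc (Clo F) \<alpha>)" for \<alpha>
    unfolding closedM_def
  proof (intro allI impI)
    fix cs :: "'a cube list" assume "length cs = fst x" "set cs \<subseteq> Mc (Clo F) \<alpha>"
    moreover have "(fst x, snd x) \<in> Clo F" using x by simp
    ultimately show "(\<lambda>s. snd x (map (\<lambda>c. c s) cs)) \<in> Mc (Clo F) \<alpha>"
      using Mc_closed[OF is_clone_Clo] by blast
  qed
  show "x \<in> bigC F" unfolding bigC_def using n p c by simp
qed

lemma Con_bigC: "Con (bigC F) = Con F"
proof (intro equalityI subsetI)
  fix \<theta> assume th: "\<theta> \<in> Con (bigC F)"
  then have "equiv UNIV \<theta>" "\<forall>x\<in>bigC F. pres x \<theta>" by (simp_all add: Con_iff)
  then have "\<theta> \<in> Con (Clo F)" using Clo_sub_bigC by (auto simp: Con_iff)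
  then show "\<theta> \<in> Con F" by (simp only: Con_Clo)
next
  fix \<theta> assume th: "\<theta> \<in> Con F"
  then have "equiv UNIV \<theta>" by (simp add: Con_iff)
  moreover have "\<forall>x\<in>bigC F. pres x \<theta>" using th by (simp add: bigC_def)
  ultimately show "\<theta> \<in> Con (bigC F)" by (simp add: Con_iff)
qed

lemma Mc_bigC: "\<alpha> \<noteq> [] \<Longrightarrow> set \<alpha> \<subseteq> Con F \<Longrightarrow> Mc (bigC F) \<alpha> = Mc (Clo F) \<alpha>"
proof (intro equalityI subsetI)
  fix c assume ne: "\<alpha> \<noteq> []" and sub: "set \<alpha> \<subseteq> Con F" and c: "c \<in> Mc (bigC F) \<alpha>"
  obtain t ks where tks: "(length ks, t) \<in> bigC F" "\<forall>k\<in>set ks. isco \<alpha> k" "c = (\<lambda>s. t (map (\<lambda>k. k s) ks))"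
    using c unfolding Mc_def by blast
  have "closedM (length ks, t) (Mc (Clo F) \<alpha>)" using tks(1) ne sub by (simp add: bigC_def)
  moreover have "set ks \<subseteq> Mc (Clo F) \<alpha>" using tks(2) Mc_coord[OF is_clone_Clo] by blast
  ultimately show "c \<in> Mc (Clo F) \<alpha>" using tks(3) unfolding closedM_def by simp
next
  fix c assume "c \<in> Mc (Clo F) \<alpha>"
  then show "c \<in> Mc (bigC F) \<alpha>" using Mc_mono[OF Clo_sub_bigC] by blast
qed

theorem mainTheorem3:
  fixes F :: "'a operation set" and q :: "'a operation"
  assumes "malcev_term F q"
  shows "\<exists>C. is_clone C \<and> q \<in> C \<and> same_con_comm C F \<and>
           (\<forall>D. is_clone D \<and> q \<in> D \<and> same_con_comm D F \<longrightarrow> D \<subseteq> C)"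
proof -
  define qf where "qf = snd q"
  have qC: "q \<in> Clo F" and q3: "fst q = 3" and qid: "\<And>x y. qf [x, x, y] = y \<and> qf [y, x, x] = y"
    using assms unfolding malcev_term_def qf_def by auto
  have qeq: "q = (3, qf)" using q3 qf_def by (cases q) simp
  have mT: "mal (Clo F) qf"
    using is_clone_Clo qC qeq qid by (unfold_locales) auto
  let ?C = "bigC F"
  have Cc: "is_clone ?C" by (rule bigC_clone)
  have qinC: "q \<in> ?C" using Clo_sub_bigC qC by blast
  have mC: "mal ?C qf" using Cc qinC qeq qid by (unfold_locales) auto
  have same: "same_con_comm ?C F"
    unfolding same_con_comm_def
  proof (intro conjI allI impI)
    show "Con ?C = Con F" by (rule Con_bigC)
    fix \<alpha> :: "'a rel list" assume l: "1 \<le> length \<alpha>" and sub: "set \<alpha> \<subseteq> Con F"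
    have ne: "\<alpha> \<noteq> []" using l by auto
    have s1: "set \<alpha> \<subseteq> Con ?C" using sub by (simp only: Con_bigC)
    have s2: "set \<alpha> \<subseteq> Con (Clo F)" using sub by (simp only: Con_Clo)
    have "commutator ?C \<alpha> = thetaE ?C \<alpha>" using mal.theta_comm[OF mC ne s1] .
    also have "\<dots> = thetaE (Clo F) \<alpha>" unfolding thetaE_def using Mc_bigC[OF ne sub] by simp
    also have "\<dots> = commutator (Clo F) \<alpha>" using mal.theta_comm[OF mT ne s2] by simp
    also have "\<dots> = commutator F \<alpha>" by (rule comm_Clo)
    finally show "commutator ?C \<alpha> = commutator F \<alpha>" .
  qed
  have maxi: "D \<subseteq> ?C" if D: "is_clone D" "q \<in> D" "same_con_comm D F" for D
  proof
    fix x assume xD: "x \<in> D"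
    have mD: "mal D qf" using D qeq qid by (unfold_locales) auto
    have CD: "Con D = Con F" using D(3) by (simp add: same_con_comm_def)
    have cmD: "\<And>\<beta>. \<beta> \<noteq> [] \<Longrightarrow> set \<beta> \<subseteq> Con F \<Longrightarrow> commutator D \<beta> = commutator F \<beta>"
    proof -
      fix \<beta> :: "'a rel list" assume "\<beta> \<noteq> []" "set \<beta> \<subseteq> Con F"
      moreover have "1 \<le> length \<beta> \<longleftrightarrow> \<beta> \<noteq> []" by (cases \<beta>) auto
      ultimately show "commutator D \<beta> = commutator F \<beta>" using D(3) unfolding same_con_comm_def by blast
    qed
    have x2: "(fst x, snd x) \<in> D" using xD by simp
    have n: "0 < fst x \<and> (\<forall>xs. length xs \<noteq> fst x \<longrightarrow> snd x xs = undefined)"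
      using clone_norm[OF D(1) x2] .
    have p: "\<forall>\<theta>\<in>Con F. pres x \<theta>"
    proof
      fix \<theta> assume "\<theta> \<in> Con F"
      then have "\<theta> \<in> Con D" using CD by simp
      then show "pres x \<theta>" using xD by (simp add: Con_iff)
    qed
    have c: "closedM x (Mc (Clo F) \<alpha>)" if ne: "\<alpha> \<noteq> []" and sub: "set \<alpha> \<subseteq> Con F" for \<alpha>
    proof -
      have T1: "Con F \<subseteq> Con (Clo F)" by (simp only: Con_Clo subset_refl)
      have T2: "Con F \<subseteq> Con D" using CD by simp
      have cm: "\<And>\<beta>. \<beta> \<noteq> [] \<Longrightarrow> set \<beta> \<subseteq> Con F \<Longrightarrow> commutator (Clo F) \<beta> = commutator D \<beta>"
        using cmD comm_Clo by simp
      have cm': "\<And>\<beta>. \<beta> \<noteq> [] \<Longrightarrow> set \<beta> \<subseteq> Con F \<Longrightarrow> commutator D \<beta> = commutator (Clo F) \<beta>"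
        using cm by simp
      have e1: "Mc (Clo F) \<alpha> \<subseteq> Mc D \<alpha>" using EQ[OF mT mD T1 T2 cm ne sub] .
      have e2: "Mc D \<alpha> \<subseteq> Mc (Clo F) \<alpha>" using EQ[OF mD mT T2 T1 cm' ne sub] .
      have eqM: "Mc (Clo F) \<alpha> = Mc D \<alpha>" using e1 e2 by (rule equalityI)
      show ?thesis unfolding closedM_def eqM
      proof (intro allI impI)
        fix cs :: "'a cube list" assume "length cs = fst x" "set cs \<subseteq> Mc D \<alpha>"
        then show "(\<lambda>s. snd x (map (\<lambda>c. c s) cs)) \<in> Mc D \<alpha>" using Mc_closed[OF D(1) x2] by blast
      qed
    qed
    show "x \<in> ?C" unfolding bigC_def using n p c by simp
  qed
  show ?thesis using Cc qinC same maxi by blast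
qed


end
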